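(* Let $1\le p<\infty$ and $f\in\mathcal S^p$. Then for any $\tau>0$, $n\in\mathbb N$ and $\varphi\in\Phi$, $$E_n(f)_p\le C_{n,\varphi,p}(\tau)\,\omega_\varphi\Big(f,\frac{\tau}{n}\Big)_p,$$ where $$C_{n,\varphi,p}(\tau):=\Big(\inf_{v\in V(\tau)}\frac{v(\tau)-v(0)}{I_{n,\varphi,p}(\tau,v)}\Big)^{1/p},\qquad I_{n,\varphi,p}(\tau,v):=\inf_{k\in\mathbb N,\,k\ge n}\int_0^\tau\varphi^p\Big(\frac{ku}{n}\Big)\,dv(u).$$ There exists a function $v^*\in V(\tau)$ at which the infimum over $v\in V(\tau)$ in the definition of $C_{n,\varphi,p}(\tau)$ is attained. Moreover, the inequality is unimprovable on the set of all non-constant $f\in\mathcal S^p$: $$K_{n,\varphi}(\tau)_p:=\sup_{f\in\mathcal S^p,\,f\not\equiv\mathrm{const}}\frac{E_n(f)_p}{\omega_\varphi(f,\tau/n)_p}=C_{n,\varphi,p}(\tau).$$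
   Context: $L$ is the space of $2\pi$-periodic Lebesgue integrable functions, with Fourier coefficients $\widehat f(k)=(2\pi)^{-1}\int_0^{2\pi}f(x)e^{-\mathrm{i}kx}\,dx$, $k\in\mathbb Z$. For $1\le p<\infty$, $\mathcal S^p$ is the space of $f\in L$ with finite norm $\|f\|_p=(\sum_{k\in\mathbb Z}|\widehat f(k)|^p)^{1/p}$; for any complex sequence $c=\{c_k\}$, $\|c\|_p=(\sum_k|c_k|^p)^{1/p}$. $E_n(f)_p=\inf\{\|f-t\|_p:t\in\mathcal T_{n-1}\}$, $\mathcal T_{n-1}$ the trigonometric polynomials $\sum_{|k|\le n-1}c_ke^{\mathrm{i}kx}$. $\Phi$ is the set of all continuous, bounded, nonnegative, even functions $\varphi:\mathbb R\to\mathbb R$ with $\varphi(0)=0$ such that $\{t:\varphi(t)=0\}$ has Lebesgue measure zero. For $\varphi\in\Phi$, $h\in\mathbb R$, $\Delta_h^\varphi f$ is the sequence $\{\varphi(kh)\widehat f(k)\}_{k\in\mathbb Z}$ and $\omega_\varphi(f,\delta)_p=\sup_{|h|\le\delta}\|\Delta_h^\varphi f\|_p$. $V(\tau)$ is the set of bounded nondecreasing functions $v$ on $[0,\tau]$ that are not constant on $[0,\tau]$; integrals are Lebesgue–Stieltjes. *)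

theory Defs
  imports "HOL-Analysis.Analysis"
begin

definition periodic_L :: "(real \<Rightarrow> complex) \<Rightarrow> bool" where
  "periodic_L f \<longleftrightarrow> (\<forall>x. f (x + 2 * pi) = f x) \<and> set_integrable lebesgue {0..2 * pi} f"

definition fourier_coeff :: "(real \<Rightarrow> complex) \<Rightarrow> int \<Rightarrow> complex" where
  "fourier_coeff f k =
     (1 / (2 * pi)) * (LINT x:{0..2 * pi}|lebesgue. f x * exp (- \<i> * of_int k * of_real x))"

definition seq_norm :: "real \<Rightarrow> (int \<Rightarrow> complex) \<Rightarrow> real" where
  "seq_norm p c = (\<Sum>\<^sub>\<infinity>k\<in>UNIV. norm (c k) powr p) powr (1 / p)"

definition Sp :: "real \<Rightarrow> (real \<Rightarrow> complex) set" where
  "Sp p = {f. periodic_L f \<and> (\<lambda>k. norm (fourier_coeff f k) powr p) summable_on (UNIV :: int set)}"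

definition trig_polys :: "nat \<Rightarrow> (real \<Rightarrow> complex) set" where
  "trig_polys m = {t. \<exists>c :: int \<Rightarrow> complex.
      t = (\<lambda>x. \<Sum>k\<in>{- int m..int m}. c k * exp (\<i> * of_int k * of_real x))}"

definition best_approx :: "nat \<Rightarrow> (real \<Rightarrow> complex) \<Rightarrow> real \<Rightarrow> real" where
  "best_approx n f p =
     Inf {seq_norm p (fourier_coeff (\<lambda>x. f x - t x)) | t. t \<in> trig_polys (n - 1)}"

definition Phi :: "(real \<Rightarrow> real) set" where
  "Phi = {\<phi>. continuous_on UNIV \<phi> \<and> bounded (range \<phi>) \<and> (\<forall>t. 0 \<le> \<phi> t)
            \<and> (\<forall>t. \<phi> (- t) = \<phi> t) \<and> \<phi> 0 = 0 \<and> {t. \<phi> t = 0} \<in> null_sets lebesgue}"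

definition Delta :: "(real \<Rightarrow> real) \<Rightarrow> real \<Rightarrow> (real \<Rightarrow> complex) \<Rightarrow> int \<Rightarrow> complex" where
  "Delta \<phi> h f k = of_real (\<phi> (of_int k * h)) * fourier_coeff f k"

definition modulus :: "(real \<Rightarrow> real) \<Rightarrow> (real \<Rightarrow> complex) \<Rightarrow> real \<Rightarrow> real \<Rightarrow> real" where
  "modulus \<phi> f \<delta> p = Sup {seq_norm p (Delta \<phi> h f) | h. \<bar>h\<bar> \<le> \<delta>}"

definition Vset :: "real \<Rightarrow> (real \<Rightarrow> real) set" where
  "Vset \<tau> = {v. mono_on {0..\<tau>} v \<and> bounded (v ` {0..\<tau>})
               \<and> (\<exists>a\<in>{0..\<tau>}. \<exists>b\<in>{0..\<tau>}. v a \<noteq> v b)}"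

text \<open>Lebesgue--Stieltjes measure of v on [0,tau]: v is extended by v(0) to the left and
  v(tau) to the right and regularized from the right, so that the total mass is v(tau) - v(0)
  (jumps at the endpoints included).\<close>
definition LS_dist :: "real \<Rightarrow> (real \<Rightarrow> real) \<Rightarrow> real \<Rightarrow> real" where
  "LS_dist \<tau> v x = (if x < 0 then v 0 else if \<tau> \<le> x then v \<tau> else Inf (v ` {x<..\<tau>}))"

definition LS_measure :: "real \<Rightarrow> (real \<Rightarrow> real) \<Rightarrow> real measure" where
  "LS_measure \<tau> v = interval_measure (LS_dist \<tau> v)"

definition I_fun :: "nat \<Rightarrow> (real \<Rightarrow> real) \<Rightarrow> real \<Rightarrow> real \<Rightarrow> (real \<Rightarrow> real) \<Rightarrow> ennreal" where
  "I_fun n \<phi> p \<tau> v = (INF k\<in>{k::nat. n \<le> k}.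
      \<integral>\<^sup>+ u. indicator {0..\<tau>} u * ennreal (\<phi> (real k * u / real n) powr p) \<partial>LS_measure \<tau> v)"

text \<open>The ratio (v(tau) - v(0)) / I, with x / 0 = \<infinity> for x > 0 (ennreal division).\<close>
definition ratio :: "nat \<Rightarrow> (real \<Rightarrow> real) \<Rightarrow> real \<Rightarrow> real \<Rightarrow> (real \<Rightarrow> real) \<Rightarrow> ennreal" where
  "ratio n \<phi> p \<tau> v = ennreal (v \<tau> - v 0) / I_fun n \<phi> p \<tau> v"

definition C_const :: "nat \<Rightarrow> (real \<Rightarrow> real) \<Rightarrow> real \<Rightarrow> real \<Rightarrow> ennreal" where
  "C_const n \<phi> p \<tau> =
     (let m = (INF v\<in>Vset \<tau>. ratio n \<phi> p \<tau> v)
      in if m = top then top else ennreal (enn2real m powr (1 / p)))"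

definition K_const :: "nat \<Rightarrow> (real \<Rightarrow> real) \<Rightarrow> real \<Rightarrow> real \<Rightarrow> ennreal" where
  "K_const n \<phi> p \<tau> = (SUP f\<in>{f \<in> Sp p. \<not> (\<exists>c. AE x in lebesgue. f x = c)}.
      ennreal (best_approx n f p) / ennreal (modulus \<phi> f (\<tau> / real n) p))"

end

theory Submission
  imports Defs "HOL-Probability.Probability"
begin

definition ee :: "int \<Rightarrow> real \<Rightarrow> complex" where
  "ee m x = exp (\<i> * of_int m * of_real x)"

lemma continuous_ee[continuous_intros]: "continuous_on S (ee m)"
  unfolding ee_def by (intro continuous_intros)

lemma norm_ee[simp]: "norm (ee m x) = 1"
  unfolding ee_def by (simp add: norm_exp_eq_Re)

lemma ee_mult: "ee j x * exp (- \<i> * of_int k * of_real x) = ee (j - k) x"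
  unfolding ee_def by (simp add: exp_add[symmetric] algebra_simps)

lemma integral_ee: "integral {0..2*pi} (ee m) = (if m = 0 then 2 * pi else 0)"
proof (cases "m = 0")
  case True
  have "ee 0 = (\<lambda>x. 1)" by (simp add: ee_def fun_eq_iff)
  then show ?thesis using True by (simp add: scaleR_conv_of_real)
next
  case False
  define F where "F x = ee m x / (\<i> * of_int m)" for x
  have der: "(F has_vector_derivative ee m x) (at x within {0..2*pi})" for x
  proof -
    have "((\<lambda>z. exp (\<i> * of_int m * z) / (\<i> * of_int m)) has_field_derivative
            exp (\<i> * of_int m * of_real x)) (at (of_real x))"
      using False by (auto intro!: derivative_eq_intros)
    from has_vector_derivative_real_field[OF this] show ?thesis
      unfolding F_def ee_def by simp
  qed
  have "(ee m has_integral (F (2*pi) - F 0)) {0..2*pi}"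
    by (rule fundamental_theorem_of_calculus) (auto intro: der)
  moreover have "F (2*pi) = F 0"
  proof -
    have "exp (\<i> * of_int m * of_real (2*pi)) = exp ((2 * of_int m * pi) * \<i>)"
      by (simp add: algebra_simps)
    also have "\<dots> = 1" by (rule exp_integer_2pi) simp
    finally have "exp (\<i> * of_int m * of_real (2*pi)) = 1" .
    then show ?thesis by (simp add: F_def ee_def)
  qed
  ultimately show ?thesis using False by (simp add: integral_unique)
qed


lemma ee_cont_integrable: "(\<lambda>x. c * ee m x) absolutely_integrable_on {0..2*pi}"
  by (rule absolutely_integrable_continuous_real) (intro continuous_intros)

lemma fc_tp:
  assumes "finite J"
  shows "fourier_coeff (\<lambda>x. \<Sum>j\<in>J. c j * ee j x) k = (if k \<in> J then c k else 0)"
proof -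
  have eq: "(\<lambda>x. (\<Sum>j\<in>J. c j * ee j x) * exp (- \<i> * of_int k * of_real x)) =
            (\<lambda>x. \<Sum>j\<in>J. c j * ee (j - k) x)"
    by (simp add: fun_eq_iff sum_distrib_right ee_mult[symmetric] mult.assoc)
  have ai: "(\<lambda>x. \<Sum>j\<in>J. c j * ee (j - k) x) absolutely_integrable_on {0..2*pi}"
    by (rule absolutely_integrable_continuous_real) (intro continuous_intros)
  have "(LINT x:{0..2*pi}|lebesgue. (\<Sum>j\<in>J. c j * ee j x) * exp (- \<i> * of_int k * of_real x))
      = integral {0..2*pi} (\<lambda>x. \<Sum>j\<in>J. c j * ee (j - k) x)"
    unfolding eq by (rule set_lebesgue_integral_eq_integral(2)[OF ai])
  also have "\<dots> = (\<Sum>j\<in>J. integral {0..2*pi} (\<lambda>x. c j * ee (j - k) x))"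
    by (rule integral_sum[OF assms]) (auto intro!: integrable_continuous_real continuous_intros)
  also have "\<dots> = (\<Sum>j\<in>J. c j * integral {0..2*pi} (ee (j - k)))"
    by (intro sum.cong refl integral_mult_right)
  also have "\<dots> = (\<Sum>j\<in>J. if j = k then c j * (2 * pi) else 0)"
    by (intro sum.cong refl) (simp add: integral_ee)
  also have "\<dots> = (if k \<in> J then c k * (2 * pi) else 0)"
    using assms by (simp add: sum.delta')
  finally show ?thesis unfolding fourier_coeff_def by simp
qed

lemma fc_const: "fourier_coeff (\<lambda>x. c) k = (if k = 0 then c else 0)"
proof -
  have "fourier_coeff (\<lambda>x. \<Sum>j\<in>{0}. c * ee j x) k = (if k \<in> {0} then c else 0)"
    by (rule fc_tp) simp
  then show ?thesis by (simp add: ee_def)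
qed

lemma fc_diff:
  assumes f: "f absolutely_integrable_on {0..2*pi}" and t: "continuous_on UNIV t"
  shows "fourier_coeff (\<lambda>x. f x - t x) k = fourier_coeff f k - fourier_coeff t k"
proof -
  let ?e = "\<lambda>x. exp (- \<i> * of_int k * of_real x)"
  have "(\<lambda>x. ?e x * f x) absolutely_integrable_on {0..2*pi}"
    apply (rule absolutely_integrable_bounded_measurable_product[OF bilinear_times _ _ _ f])
      apply (rule continuous_imp_measurable_on_sets_lebesgue)
       apply (intro continuous_intros)
      apply simp
     apply simp
    apply (rule boundedI[where B=1])
    apply (auto simp: norm_exp_eq_Re)
    done
  then have i1: "(\<lambda>x. f x * ?e x) absolutely_integrable_on {0..2*pi}"
    by (simp add: mult.commute)
  have i2: "(\<lambda>x. t x * ?e x) absolutely_integrable_on {0..2*pi}"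
    by (rule absolutely_integrable_continuous_real)
       (intro continuous_intros continuous_on_subset[OF t], auto)
  have "(LINT x:{0..2*pi}|lebesgue. (f x - t x) * ?e x) =
        (LINT x:{0..2*pi}|lebesgue. f x * ?e x - t x * ?e x)"
    by (simp add: algebra_simps)
  also have "\<dots> = (LINT x:{0..2*pi}|lebesgue. f x * ?e x) - (LINT x:{0..2*pi}|lebesgue. t x * ?e x)"
    by (rule set_integral_diff(2)[OF i1 i2])
  finally have "complex_of_real (1 / (2 * pi)) * (LINT x:{0..2*pi}|lebesgue. (f x - t x) * ?e x) = complex_of_real (1 / (2 * pi)) * ((LINT x:{0..2*pi}|lebesgue. f x * ?e x) - (LINT x:{0..2*pi}|lebesgue. t x * ?e x))" by (rule arg_cong)
  then show ?thesis unfolding fourier_coeff_def by (simp only: right_diff_distrib)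
qed

lemma tp_in_trig_polys:
  assumes "J \<subseteq> {- int m..int m}"
  shows "(\<lambda>x. \<Sum>j\<in>J. c j * ee j x) \<in> trig_polys m"
proof -
  have fin: "finite J" using assms finite_subset by blast
  have "(\<lambda>x. \<Sum>j\<in>J. c j * ee j x) =
        (\<lambda>x. \<Sum>k\<in>{- int m..int m}. (if k \<in> J then c k else 0) * exp (\<i> * of_int k * of_real x))"
  proof
    fix x
    have "(\<Sum>k\<in>{- int m..int m}. (if k \<in> J then c k else 0) * exp (\<i> * of_int k * of_real x))
        = (\<Sum>k\<in>{- int m..int m}. if k \<in> J then c k * ee k x else 0)"
      by (intro sum.cong) (auto simp: ee_def)
    also have "\<dots> = (\<Sum>k\<in>J. c k * ee k x)"
      using assms by (simp add: sum.If_cases Int_absorb1)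
    finally show "(\<Sum>j\<in>J. c j * ee j x) = (\<Sum>k\<in>{- int m..int m}. (if k \<in> J then c k else 0) * exp (\<i> * of_int k * of_real x))" by simp
  qed
  then show ?thesis unfolding trig_polys_def
    by (intro CollectI exI[of _ "\<lambda>k. if k \<in> J then c k else 0"])
qed

lemma trig_polys_tp:
  assumes "t \<in> trig_polys m"
  obtains c where "t = (\<lambda>x. \<Sum>j\<in>{- int m..int m}. c j * ee j x)"
  using assms unfolding trig_polys_def ee_def by auto

lemma trig_polys_cont: "t \<in> trig_polys m \<Longrightarrow> continuous_on UNIV t"
  by (erule trig_polys_tp) (auto intro!: continuous_intros)

lemma fc_trig_polys: "t \<in> trig_polys m \<Longrightarrow> \<bar>k\<bar> > int m \<Longrightarrow> fourier_coeff t k = 0"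
  by (erule trig_polys_tp) (simp add: fc_tp, arith)

lemma fs_summable:
  fixes g :: "'a \<Rightarrow> real"
  assumes "finite F" "\<And>k. k \<notin> F \<Longrightarrow> g k = 0"
  shows "g summable_on UNIV" and "infsum g UNIV = sum g F"
proof -
  have "g summable_on F" using assms by simp
  then show "g summable_on UNIV"
    by (subst summable_on_cong_neutral[where T=F and g=g]) (use assms in auto)
  have "infsum g UNIV = infsum g F"
    by (rule infsum_cong_neutral) (use assms in auto)
  then show "infsum g UNIV = sum g F" using assms by simp
qed

lemma summable_comp_nonneg:
  fixes f g :: "'a \<Rightarrow> real"
  assumes g: "g summable_on A" and fg: "\<And>x. x \<in> A \<Longrightarrow> 0 \<le> f x \<and> f x \<le> g x"
  shows "f summable_on A"
proof (rule nonneg_bdd_above_summable_on)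
  show "\<And>x. x \<in> A \<Longrightarrow> 0 \<le> f x" using fg by auto
  show "bdd_above (sum f ` {F. F \<subseteq> A \<and> finite F})"
  proof (rule bdd_aboveI2)
    fix F assume F: "F \<in> {F. F \<subseteq> A \<and> finite F}"
    have "sum f F \<le> sum g F" using F fg by (auto intro!: sum_mono)
    also have "\<dots> \<le> infsum g A"
      using F fg by (intro finite_sum_le_infsum[OF g]) (auto intro: order_trans)
    finally show "sum f F \<le> infsum g A" .
  qed
qed

lemma seq_norm_nonneg: "seq_norm p c \<ge> 0"
  unfolding seq_norm_def by simp

lemma Sp_abs_int: "f \<in> Sp p \<Longrightarrow> f absolutely_integrable_on {0..2*pi}"
  unfolding Sp_def periodic_L_def by auto

lemma Sp_summable: "f \<in> Sp p \<Longrightarrow> (\<lambda>k. norm (fourier_coeff f k) powr p) summable_on UNIV"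
  unfolding Sp_def by auto

definition tail :: "nat \<Rightarrow> (real \<Rightarrow> complex) \<Rightarrow> real \<Rightarrow> real" where
  "tail n f p = infsum (\<lambda>k. if int n \<le> \<bar>k\<bar> then norm (fourier_coeff f k) powr p else 0) UNIV"

lemma best_approx_le_tail:
  assumes f: "f \<in> Sp p" and p: "1 \<le> p" and n: "1 \<le> n"
  shows "best_approx n f p \<le> tail n f p powr (1 / p)"
proof -
  define J where "J = {- int (n - 1)..int (n - 1)}"
  define t where "t = (\<lambda>x. \<Sum>j\<in>J. fourier_coeff f j * ee j x)"
  have tT: "t \<in> trig_polys (n - 1)" unfolding t_def J_def by (rule tp_in_trig_polys) simp
  have fc: "fourier_coeff (\<lambda>x. f x - t x) k = (if int n \<le> \<bar>k\<bar> then fourier_coeff f k else 0)" for k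
  proof -
    have "fourier_coeff (\<lambda>x. f x - t x) k = fourier_coeff f k - fourier_coeff t k"
      by (rule fc_diff[OF Sp_abs_int[OF f] trig_polys_cont[OF tT]])
    also have "fourier_coeff t k = (if k \<in> J then fourier_coeff f k else 0)"
      unfolding t_def by (rule fc_tp) (simp add: J_def)
    finally show ?thesis using n by (auto simp: J_def)
  qed
  have "seq_norm p (fourier_coeff (\<lambda>x. f x - t x)) = tail n f p powr (1 / p)"
    unfolding seq_norm_def tail_def fc
    by (rule arg_cong[where f="\<lambda>z. z powr (1/p)"], rule infsum_cong) (use p in auto)
  moreover have "best_approx n f p \<le> seq_norm p (fourier_coeff (\<lambda>x. f x - t x))"
    unfolding best_approx_def
    by (rule cInf_lower) (use tT seq_norm_nonneg in \<open>auto intro: bdd_belowI[where m=0]\<close>)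
  ultimately show ?thesis by simp
qed

lemma best_approx_nonneg:
  shows "0 \<le> best_approx n f p"
proof -
  have "(\<lambda>x. \<Sum>j\<in>{}. 0 * ee j x) \<in> trig_polys (n - 1)" by (rule tp_in_trig_polys) simp
  then have "(\<lambda>x. 0) \<in> trig_polys (n - 1)" by simp
  then show ?thesis unfolding best_approx_def
    by (intro cInf_greatest) (auto simp: seq_norm_nonneg)
qed

lemma best_approx_ge_tp:
  assumes J: "finite J" "\<And>j. j \<in> J \<Longrightarrow> int n \<le> \<bar>j\<bar>" and p: "1 \<le> p" and n: "1 \<le> n"
  shows "(\<Sum>j\<in>J. norm (c j) powr p) powr (1 / p) \<le> best_approx n (\<lambda>x. \<Sum>j\<in>J. c j * ee j x) p"
proof -
  let ?f = "\<lambda>x. \<Sum>j\<in>J. c j * ee j x"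
  have "(\<lambda>x. 0) \<in> trig_polys (n - 1)"
    using tp_in_trig_polys[of "{}" "n - 1"] by simp
  then have ne: "{seq_norm p (fourier_coeff (\<lambda>x. ?f x - t x)) | t. t \<in> trig_polys (n - 1)} \<noteq> {}"
    by blast
  show ?thesis unfolding best_approx_def
  proof (rule cInf_greatest[OF ne], safe)
    fix t assume tT: "t \<in> trig_polys (n - 1)"
    have fab: "?f absolutely_integrable_on {0..2*pi}"
      by (rule absolutely_integrable_continuous_real) (intro continuous_intros)
    have fc: "fourier_coeff (\<lambda>x. ?f x - t x) k = (if k \<in> J then c k else 0) - fourier_coeff t k" for k
      using fc_diff[OF fab trig_polys_cont[OF tT]] fc_tp[OF J(1)] by simp
    have t0: "fourier_coeff t k = 0" if "\<bar>k\<bar> \<ge> int n" for k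
      using fc_trig_polys[OF tT, of k] that n by (simp add: of_nat_diff)
    define F where "F = J \<union> {- int (n - 1)..int (n - 1)}"
    have finF: "finite F" using J by (simp add: F_def)
    have out: "fourier_coeff (\<lambda>x. ?f x - t x) k = 0" if "k \<notin> F" for k
      using that fc[of k] t0[of k] by (auto simp: F_def)
    have sm: "(\<lambda>k. norm (fourier_coeff (\<lambda>x. ?f x - t x) k) powr p) summable_on UNIV"
      by (rule fs_summable(1)[OF finF]) (use out in simp)
    have "(\<Sum>j\<in>J. norm (c j) powr p) = (\<Sum>j\<in>J. norm (fourier_coeff (\<lambda>x. ?f x - t x) j) powr p)"
      by (intro sum.cong refl) (use fc t0 J(2) in simp)
    also have "\<dots> \<le> infsum (\<lambda>k. norm (fourier_coeff (\<lambda>x. ?f x - t x) k) powr p) UNIV"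
      by (rule finite_sum_le_infsum[OF sm J(1)]) auto
    finally show "(\<Sum>j\<in>J. norm (c j) powr p) powr (1 / p) \<le> seq_norm p (fourier_coeff (\<lambda>x. ?f x - t x))"
      unfolding seq_norm_def using p by (intro powr_mono2) (auto intro: sum_nonneg)
  qed
qed

lemma Phi_D:
  assumes "\<phi> \<in> Phi"
  shows "continuous_on UNIV \<phi>" "bounded (range \<phi>)" "\<And>t. 0 \<le> \<phi> t" "\<And>t. \<phi> (- t) = \<phi> t"
    "\<phi> 0 = 0" "{t. \<phi> t = 0} \<in> null_sets lebesgue"
  using assms unfolding Phi_def by auto

lemma Phi_bound:
  assumes "\<phi> \<in> Phi"
  obtains B where "B > 0" "\<And>t. \<phi> t \<le> B"
proof -
  obtain B where "\<And>t. norm (\<phi> t) \<le> B" using Phi_D(2)[OF assms] by (auto simp: bounded_iff)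
  then have "\<And>t. \<phi> t \<le> max B 1" by (metis abs_le_D1 max.coboundedI1 real_norm_def)
  then show ?thesis using that[of "max B 1"] by auto
qed

lemma Phi_cont: "\<phi> \<in> Phi \<Longrightarrow> isCont \<phi> x"
  using Phi_D(1) continuous_on_eq_continuous_at by blast

lemma Phi_abs: "\<phi> \<in> Phi \<Longrightarrow> \<phi> \<bar>t\<bar> = \<phi> t"
  using Phi_D(4) by (cases "t \<ge> 0") auto

lemma Phi_interval:
  assumes "\<phi> \<in> Phi" "\<And>t. t \<in> {a..b} \<Longrightarrow> \<phi> t = 0"
  shows "b \<le> a"
proof -
  have "{a..b} \<subseteq> {t. \<phi> t = 0}" using assms by auto
  then have "negligible {a..b}"
    using Phi_D(6)[OF assms(1)] negligible_iff_null_sets negligible_subset by blast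
  then show ?thesis using negligible_interval(1)[of a b] by (auto simp: box_real)
qed

lemma norm_Delta_powr:
  assumes "\<phi> \<in> Phi"
  shows "norm (Delta \<phi> h f k) powr p = \<phi> (of_int k * h) powr p * norm (fourier_coeff f k) powr p"
  using Phi_D(3)[OF assms] by (simp add: Delta_def norm_mult powr_mult)

lemma Delta_summable:
  assumes "\<phi> \<in> Phi" "f \<in> Sp p" "0 \<le> p"
  shows "(\<lambda>k. \<phi> (of_int k * h) powr p * norm (fourier_coeff f k) powr p) summable_on UNIV"
    and "infsum (\<lambda>k. \<phi> (of_int k * h) powr p * norm (fourier_coeff f k) powr p) UNIV
         \<le> (SOME B. B > 0 \<and> (\<forall>t. \<phi> t \<le> B)) powr p * infsum (\<lambda>k. norm (fourier_coeff f k) powr p) UNIV"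
proof -
  define B where "B = (SOME B. B > 0 \<and> (\<forall>t. \<phi> t \<le> B))"
  have "B > 0 \<and> (\<forall>t. \<phi> t \<le> B)" unfolding B_def
    by (rule someI_ex) (use Phi_bound[OF assms(1)] in metis)
  then have B: "B > 0" "\<And>t. \<phi> t \<le> B" by auto
  have sg: "(\<lambda>k. B powr p * norm (fourier_coeff f k) powr p) summable_on UNIV"
    using Sp_summable[OF assms(2)] by (rule summable_on_cmult_right)
  have le: "\<phi> (of_int k * h) powr p * norm (fourier_coeff f k) powr p \<le> B powr p * norm (fourier_coeff f k) powr p" for k
    using B Phi_D(3)[OF assms(1)] assms(3) by (intro mult_right_mono powr_mono2) auto
  show sm: "(\<lambda>k. \<phi> (of_int k * h) powr p * norm (fourier_coeff f k) powr p) summable_on UNIV"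
    by (rule summable_comp_nonneg[OF sg]) (use le in auto)
  have "infsum (\<lambda>k. \<phi> (of_int k * h) powr p * norm (fourier_coeff f k) powr p) UNIV
        \<le> infsum (\<lambda>k. B powr p * norm (fourier_coeff f k) powr p) UNIV"
    by (rule infsum_mono[OF sm sg le])
  also have "\<dots> = B powr p * infsum (\<lambda>k. norm (fourier_coeff f k) powr p) UNIV"
    by (rule infsum_cmult_right) (use Sp_summable[OF assms(2)] in auto)
  finally show "infsum (\<lambda>k. \<phi> (of_int k * h) powr p * norm (fourier_coeff f k) powr p) UNIV
         \<le> (SOME B. B > 0 \<and> (\<forall>t. \<phi> t \<le> B)) powr p * infsum (\<lambda>k. norm (fourier_coeff f k) powr p) UNIV"
    unfolding B_def .
qed

lemma seq_norm_Delta: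
  assumes "\<phi> \<in> Phi"
  shows "seq_norm p (Delta \<phi> h f) = infsum (\<lambda>k. \<phi> (of_int k * h) powr p * norm (fourier_coeff f k) powr p) UNIV powr (1/p)"
  unfolding seq_norm_def norm_Delta_powr[OF assms] ..

lemma modulus_upper:
  assumes "\<phi> \<in> Phi" "f \<in> Sp p" "1 \<le> p" "\<bar>h\<bar> \<le> \<delta>"
  shows "seq_norm p (Delta \<phi> h f) \<le> modulus \<phi> f \<delta> p"
  unfolding modulus_def
proof (rule cSup_upper)
  show "seq_norm p (Delta \<phi> h f) \<in> {seq_norm p (Delta \<phi> h f) |h. \<bar>h\<bar> \<le> \<delta>}" using assms by auto
  define M where "M = ((SOME B. B > 0 \<and> (\<forall>t. \<phi> t \<le> B)) powr p * infsum (\<lambda>k. norm (fourier_coeff f k) powr p) UNIV) powr (1/p)"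
  show "bdd_above {seq_norm p (Delta \<phi> h f) |h. \<bar>h\<bar> \<le> \<delta>}"
  proof (rule bdd_aboveI[where M=M], safe)
    fix h' :: real
    show "seq_norm p (Delta \<phi> h' f) \<le> M"
      unfolding seq_norm_Delta[OF assms(1)] M_def using assms
      by (intro powr_mono2 Delta_summable infsum_nonneg) (auto intro!: mult_nonneg_nonneg Phi_D)
  qed
qed

lemma modulus_nonneg:
  assumes "\<phi> \<in> Phi" "f \<in> Sp p" "1 \<le> p" "0 \<le> \<delta>"
  shows "0 \<le> modulus \<phi> f \<delta> p"
  using modulus_upper[OF assms(1-3), of 0 \<delta>] assms(4) seq_norm_nonneg[of p "Delta \<phi> 0 f"] by simp

lemma finite_sum_le_modulus:
  assumes "\<phi> \<in> Phi" "f \<in> Sp p" "1 \<le> p" "\<bar>h\<bar> \<le> \<delta>" "finite F"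
  shows "(\<Sum>k\<in>F. \<phi> (of_int k * h) powr p * norm (fourier_coeff f k) powr p) \<le> modulus \<phi> f \<delta> p powr p"
proof -
  let ?X = "infsum (\<lambda>k. \<phi> (of_int k * h) powr p * norm (fourier_coeff f k) powr p) UNIV"
  have X0: "0 \<le> ?X" by (rule infsum_nonneg) (auto intro!: mult_nonneg_nonneg)
  have "(\<Sum>k\<in>F. \<phi> (of_int k * h) powr p * norm (fourier_coeff f k) powr p) \<le> ?X"
    by (rule finite_sum_le_infsum) (use assms Delta_summable[OF assms(1,2)] in auto)
  also have "?X = (?X powr (1/p)) powr p" using assms X0 by (simp add: powr_powr)
  also have "\<dots> \<le> modulus \<phi> f \<delta> p powr p"
    using modulus_upper[OF assms(1-4)] seq_norm_Delta[OF assms(1)] assms(3) X0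
    by (intro powr_mono2) auto
  finally show ?thesis .
qed

lemma modulus_zero:
  assumes "\<phi> \<in> Phi" "f \<in> Sp p" "1 \<le> p" "0 < \<delta>" "modulus \<phi> f \<delta> p \<le> 0" "k \<noteq> 0"
  shows "fourier_coeff f k = 0"
proof (rule ccontr)
  assume nz: "fourier_coeff f k \<noteq> 0"
  have z: "\<phi> (of_int k * h) = 0" if "h \<in> {0..\<delta>}" for h
  proof -
    have "(\<Sum>j\<in>{k}. \<phi> (of_int j * h) powr p * norm (fourier_coeff f j) powr p) \<le> modulus \<phi> f \<delta> p powr p"
      by (rule finite_sum_le_modulus) (use assms that in auto)
    also have "\<dots> = 0" using assms modulus_nonneg[OF assms(1-3), of \<delta>] by simp
    finally show ?thesis using nz Phi_D(3)[OF assms(1)]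
      by (simp add: mult_le_0_iff)
  qed
  have ka: "\<bar>of_int k\<bar> * \<delta> > (0::real)" using assms by simp
  have "\<phi> t = 0" if "t \<in> {0..\<bar>of_int k\<bar> * \<delta>}" for t
  proof -
    have "t / \<bar>of_int k\<bar> \<in> {0..\<delta>}" using that assms
      by (auto simp: field_simps)
    from z[OF this] have "\<phi> (of_int k * (t / \<bar>of_int k\<bar>)) = 0" .
    then show ?thesis using Phi_abs[OF assms(1)] assms
      by (cases "k > 0") (auto simp: Phi_D(4)[OF assms(1)])
  qed
  then have "\<bar>of_int k\<bar> * \<delta> \<le> 0" by (rule Phi_interval[OF assms(1)])
  then show False using ka by simp
qed


lemma modulus_tp_le:
  assumes phi: "\<phi> \<in> Phi" and J: "finite J" "\<And>j. j \<in> J \<Longrightarrow> j > 0" and p: "1 \<le> p"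
    and T: "\<And>h. 0 \<le> h \<Longrightarrow> h \<le> \<delta> \<Longrightarrow> (\<Sum>j\<in>J. \<phi> (of_int j * h) powr p * norm (c j) powr p) \<le> T"
    and d: "0 \<le> \<delta>"
  shows "modulus \<phi> (\<lambda>x. \<Sum>j\<in>J. c j * ee j x) \<delta> p \<le> T powr (1/p)"
  unfolding modulus_def
proof (rule cSup_least)
  show "{seq_norm p (Delta \<phi> h (\<lambda>x. \<Sum>j\<in>J. c j * ee j x)) |h. \<bar>h\<bar> \<le> \<delta>} \<noteq> {}"
    using d by (auto intro!: exI[of _ 0])
next
  fix x assume "x \<in> {seq_norm p (Delta \<phi> h (\<lambda>x. \<Sum>j\<in>J. c j * ee j x)) |h. \<bar>h\<bar> \<le> \<delta>}"
  then obtain h where h: "\<bar>h\<bar> \<le> \<delta>" and x: "x = seq_norm p (Delta \<phi> h (\<lambda>x. \<Sum>j\<in>J. c j * ee j x))"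
    by auto
  let ?g = "\<lambda>k. \<phi> (of_int k * h) powr p * norm (fourier_coeff (\<lambda>x. \<Sum>j\<in>J. c j * ee j x) k) powr p"
  have out: "?g k = 0" if "k \<notin> J" for k using that by (simp add: fc_tp[OF J(1)])
  have "infsum ?g UNIV = sum ?g J" by (rule fs_summable(2)[OF J(1)]) (use out in auto)
  also have "\<dots> = (\<Sum>j\<in>J. \<phi> (of_int j * \<bar>h\<bar>) powr p * norm (c j) powr p)"
  proof (intro sum.cong refl)
    fix j assume j: "j \<in> J"
    have "\<phi> (of_int j * h) = \<phi> (of_int j * \<bar>h\<bar>)"
      using J(2)[OF j] Phi_abs[OF phi, of "of_int j * h"] by (simp add: abs_mult)
    then show "?g j = \<phi> (of_int j * \<bar>h\<bar>) powr p * norm (c j) powr p"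
      using j by (simp add: fc_tp[OF J(1)])
  qed
  also have "\<dots> \<le> T" using T[of "\<bar>h\<bar>"] h by auto
  finally have le: "infsum ?g UNIV \<le> T" .
  have "0 \<le> infsum ?g UNIV" by (rule infsum_nonneg) auto
  then show "x \<le> T powr (1/p)"
    unfolding x seq_norm_Delta[OF phi] using le p by (intro powr_mono2) auto
qed

lemma sets_LS[simp, measurable_cong]: "sets (LS_measure \<tau> v) = sets borel"
  unfolding LS_measure_def by simp

lemma space_LS[simp]: "space (LS_measure \<tau> v) = UNIV"
  unfolding LS_measure_def by simp

lemma Vset_D:
  assumes "v \<in> Vset \<tau>"
  shows "\<And>x y. x \<in> {0..\<tau>} \<Longrightarrow> y \<in> {0..\<tau>} \<Longrightarrow> x \<le> y \<Longrightarrow> v x \<le> v y"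
  using assms unfolding Vset_def by (auto simp: mono_on_def)

lemma Vset_pos:
  assumes "v \<in> Vset \<tau>"
  shows "v 0 < v \<tau>"
proof -
  from assms obtain a b where ab: "a \<in> {0..\<tau>}" "b \<in> {0..\<tau>}" "v a \<noteq> v b"
    unfolding Vset_def by auto
  then have t: "0 \<le> \<tau>" by auto
  have "v 0 \<le> v a" "v a \<le> v \<tau>" "v 0 \<le> v b" "v b \<le> v \<tau>"
    using ab t by (auto intro!: Vset_D[OF assms])
  then show ?thesis using ab by linarith
qed

context
  fixes \<tau> :: real and v :: "real \<Rightarrow> real"
  assumes v: "v \<in> Vset \<tau>" and tau: "0 < \<tau>"
begin

private lemma ne: "0 \<le> x \<Longrightarrow> x < \<tau> \<Longrightarrow> v ` {x<..\<tau>} \<noteq> {}" by auto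

private lemma bdd: "0 \<le> x \<Longrightarrow> bdd_below (v ` {x<..\<tau>})"
  by (rule bdd_belowI[where m="v 0"]) (auto intro!: Vset_D[OF v])

private lemma inf_ge: "0 \<le> x \<Longrightarrow> x < \<tau> \<Longrightarrow> v 0 \<le> Inf (v ` {x<..\<tau>})"
  by (rule cInf_greatest) (auto intro!: Vset_D[OF v])

private lemma inf_le: "0 \<le> x \<Longrightarrow> x < \<tau> \<Longrightarrow> z \<in> {x<..\<tau>} \<Longrightarrow> Inf (v ` {x<..\<tau>}) \<le> v z"
  by (rule cInf_lower) (auto intro: bdd)

lemma LS_mono: "x \<le> y \<Longrightarrow> LS_dist \<tau> v x \<le> LS_dist \<tau> v y"
proof -
  assume xy: "x \<le> y"
  have v0t: "v 0 \<le> v \<tau>" using Vset_pos[OF v] by simp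
  show ?thesis
  proof (cases "x < 0")
    case True
    then show ?thesis using inf_ge v0t by (auto simp: LS_dist_def)
  next
    case False
    show ?thesis
    proof (cases "\<tau> \<le> y")
      case True
      then show ?thesis using False inf_le[of x \<tau>] tau by (auto simp: LS_dist_def)
    next
      case False2: False
      have "Inf (v ` {x<..\<tau>}) \<le> Inf (v ` {y<..\<tau>})"
        by (rule cInf_superset_mono) (use False False2 xy bdd in auto)
      then show ?thesis using False False2 xy by (auto simp: LS_dist_def)
    qed
  qed
qed

lemma LS_rcont: "continuous (at_right a) (LS_dist \<tau> v)"
proof (subst continuous_at_right_real_increasing[OF LS_mono], safe)
  fix e :: real assume e: "e > 0"
  show "\<exists>d>0. LS_dist \<tau> v (a + d) - LS_dist \<tau> v a < e"
  proof (cases "a < 0")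
    case True
    then show ?thesis using e by (intro exI[of _ "- a / 2"]) (auto simp: LS_dist_def)
  next
    case False
    show ?thesis
    proof (cases "\<tau> \<le> a")
      case True
      then show ?thesis using e tau by (intro exI[of _ 1]) (auto simp: LS_dist_def)
    next
      case False2: False
      have "\<exists>z\<in>{a<..\<tau>}. v z < Inf (v ` {a<..\<tau>}) + e"
        using cInf_less_iff[OF ne[of a] bdd[of a], of "Inf (v ` {a<..\<tau>}) + e"] False False2 e by simp
      then obtain z where z: "z \<in> {a<..\<tau>}" "v z < Inf (v ` {a<..\<tau>}) + e" by blast
      define d where "d = (z - a) / 2"
      have d: "d > 0" "a + d < z" using z unfolding d_def by (auto simp: field_simps)
      have "LS_dist \<tau> v (a + d) \<le> v z"
        using d z False False2 inf_le[of "a + d" z] by (auto simp: LS_dist_def)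
      then show ?thesis using d z False False2 by (intro exI[of _ d]) (auto simp: LS_dist_def)
    qed
  qed
qed

lemma LS_mass: "emeasure (LS_measure \<tau> v) {0..\<tau>} \<le> ennreal (v \<tau> - v 0)"
proof -
  have "emeasure (LS_measure \<tau> v) {0..\<tau>} \<le> emeasure (LS_measure \<tau> v) {-1<..\<tau>}"
    by (rule emeasure_mono) auto
  also have "\<dots> = ennreal (LS_dist \<tau> v \<tau> - LS_dist \<tau> v (-1))"
    unfolding LS_measure_def using tau
    by (intro emeasure_interval_measure_Ioc LS_mono LS_rcont) auto
  also have "\<dots> = ennreal (v \<tau> - v 0)" using tau by (simp add: LS_dist_def)
  finally show ?thesis .
qed

lemma LS_finite: "emeasure (LS_measure \<tau> v) {0..\<tau>} < \<infinity>"
  using LS_mass by (simp add: le_less_trans)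

end

definition gk :: "nat \<Rightarrow> (real \<Rightarrow> real) \<Rightarrow> real \<Rightarrow> nat \<Rightarrow> real \<Rightarrow> real" where
  "gk n \<phi> p k u = \<phi> (real k * u / real n) powr p"

lemma I_fun_gk: "I_fun n \<phi> p \<tau> v = (INF k\<in>{k. n \<le> k}.
      \<integral>\<^sup>+ u. indicator {0..\<tau>} u * ennreal (gk n \<phi> p k u) \<partial>LS_measure \<tau> v)"
  unfolding I_fun_def gk_def ..

context
  fixes p \<tau> :: real and n :: nat and \<phi> :: "real \<Rightarrow> real"
  assumes p: "1 \<le> p" and tau: "0 < \<tau>" and n: "1 \<le> n" and phi: "\<phi> \<in> Phi"
begin

lemma gk_nonneg: "0 \<le> gk n \<phi> p k u"
  unfolding gk_def by simp

lemma gk_cont: "isCont (gk n \<phi> p k) u"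
proof -
  have c: "isCont (\<lambda>u. \<phi> (real k * u / real n)) u"
    by (rule continuous_at_compose[unfolded o_def, OF _ Phi_cont[OF phi]]) (use n in \<open>intro continuous_intros, auto\<close>)
  show ?thesis unfolding gk_def isCont_def
    by (rule tendsto_powr'[OF c[unfolded isCont_def] tendsto_const]) (use p Phi_D(3)[OF phi] in auto)
qed

lemma gk_borel[measurable]: "gk n \<phi> p k \<in> borel_measurable borel"
  by (rule borel_measurable_continuous_onI) (simp add: continuous_at_imp_continuous_on gk_cont)

definition Bp :: real where "Bp = (SOME B. B > 0 \<and> (\<forall>t. \<phi> t \<le> B)) powr p"

lemma Bp: "0 < Bp" "gk n \<phi> p k u \<le> Bp"
proof -
  have "(SOME B. B > 0 \<and> (\<forall>t. \<phi> t \<le> B)) > 0 \<and> (\<forall>t. \<phi> t \<le> (SOME B. B > 0 \<and> (\<forall>t. \<phi> t \<le> B)))"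
    by (rule someI_ex) (use Phi_bound[OF phi] in metis)
  then show "0 < Bp" "gk n \<phi> p k u \<le> Bp"
    unfolding Bp_def gk_def using p Phi_D(3)[OF phi] by (auto intro!: powr_mono2)
qed

lemma gk_even: "gk n \<phi> p (nat \<bar>k\<bar>) u = \<phi> (of_int k * (u / real n)) powr p"
proof -
  have "real (nat \<bar>k\<bar>) * u / real n = \<bar>of_int k\<bar> * (u / real n)" by simp
  also have "\<phi> \<dots> = \<phi> (of_int k * (u / real n))"
    by (cases "k \<ge> 0") (auto simp: Phi_D(4)[OF phi])
  finally show ?thesis unfolding gk_def by simp
qed

lemma Jk_fin:
  assumes v: "v \<in> Vset \<tau>"
  shows "(\<integral>\<^sup>+ u. indicator {0..\<tau>} u * ennreal (gk n \<phi> p k u) \<partial>LS_measure \<tau> v) \<le> ennreal (Bp * (v \<tau> - v 0))"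
proof -
  have "(\<integral>\<^sup>+ u. indicator {0..\<tau>} u * ennreal (gk n \<phi> p k u) \<partial>LS_measure \<tau> v)
      \<le> (\<integral>\<^sup>+ u. ennreal Bp * indicator {0..\<tau>} u \<partial>LS_measure \<tau> v)"
    by (intro nn_integral_mono) (auto simp: Bp indicator_def intro!: ennreal_leI)
  also have "\<dots> = ennreal Bp * emeasure (LS_measure \<tau> v) {0..\<tau>}"
    by (subst nn_integral_cmult_indicator) auto
  also have "\<dots> \<le> ennreal Bp * ennreal (v \<tau> - v 0)"
    by (intro mult_left_mono LS_mass[OF v tau]) auto
  also have "\<dots> = ennreal (Bp * (v \<tau> - v 0))"
    using Bp(1) Vset_pos[OF v] by (simp add: ennreal_mult)
  finally show ?thesis .
qed

lemma I_fin:
  assumes v: "v \<in> Vset \<tau>"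
  shows "I_fun n \<phi> p \<tau> v \<le> ennreal (Bp * (v \<tau> - v 0))"
  unfolding I_fun_gk using n by (intro INF_lower2[of n] Jk_fin[OF v]) auto

lemma part1_core:
  assumes f: "f \<in> Sp p" and v: "v \<in> Vset \<tau>"
  shows "ennreal (tail n f p) * I_fun n \<phi> p \<tau> v \<le> ennreal ((v \<tau> - v 0) * modulus \<phi> f (\<tau> / real n) p powr p)"
proof -
  let ?\<mu> = "LS_measure \<tau> v"
  let ?J = "\<lambda>k. \<integral>\<^sup>+ u. indicator {0..\<tau>} u * ennreal (gk n \<phi> p k u) \<partial>?\<mu>"
  let ?\<omega> = "modulus \<phi> f (\<tau> / real n) p"
  define a where "a k = (if int n \<le> \<bar>k\<bar> then norm (fourier_coeff f k) powr p else 0)" for k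
  define W where "W = (v \<tau> - v 0) * ?\<omega> powr p"
  have W0: "0 \<le> W" unfolding W_def using Vset_pos[OF v] by simp
  have lt: "I_fun n \<phi> p \<tau> v < top" using I_fin[OF v] by (meson ennreal_less_top le_less_trans)
  obtain i where i: "I_fun n \<phi> p \<tau> v = ennreal i" "0 \<le> i"
    using lt by (cases "I_fun n \<phi> p \<tau> v" rule: ennreal_cases) auto
  have a0: "0 \<le> a k" for k by (simp add: a_def)
  have asum: "a summable_on UNIV"
    by (rule summable_comp_nonneg[OF Sp_summable[OF f]]) (auto simp: a_def)
  have fin: "(\<Sum>k\<in>F. a k * i) \<le> W" if F: "finite F" for F
  proof -
    have "ennreal (\<Sum>k\<in>F. a k * i) = (\<Sum>k\<in>F. ennreal (a k) * I_fun n \<phi> p \<tau> v)"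
      using a0 i by (simp add: ennreal_mult[symmetric])
    also have "\<dots> \<le> (\<Sum>k\<in>F. ennreal (a k) * ?J (nat \<bar>k\<bar>))"
    proof (intro sum_mono)
      fix k assume "k \<in> F"
      show "ennreal (a k) * I_fun n \<phi> p \<tau> v \<le> ennreal (a k) * ?J (nat \<bar>k\<bar>)"
      proof (cases "int n \<le> \<bar>k\<bar>")
        case True
        then have "I_fun n \<phi> p \<tau> v \<le> ?J (nat \<bar>k\<bar>)" unfolding I_fun_gk
          by (intro INF_lower) auto
        then show ?thesis by (rule mult_left_mono) simp
      next
        case False
        then show ?thesis by (simp add: a_def)
      qed
    qed
    also have "\<dots> = (\<Sum>k\<in>F. \<integral>\<^sup>+ u. indicator {0..\<tau>} u * ennreal (a k * gk n \<phi> p (nat \<bar>k\<bar>) u) \<partial>?\<mu>)"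
      by (intro sum.cong refl, subst nn_integral_cmult[symmetric])
         (auto simp: ennreal_mult a0 gk_nonneg mult_ac)
    also have "\<dots> = \<integral>\<^sup>+ u. (\<Sum>k\<in>F. indicator {0..\<tau>} u * ennreal (a k * gk n \<phi> p (nat \<bar>k\<bar>) u)) \<partial>?\<mu>"
      by (rule nn_integral_sum[symmetric]) auto
    also have "\<dots> \<le> \<integral>\<^sup>+ u. ennreal (?\<omega> powr p) * indicator {0..\<tau>} u \<partial>?\<mu>"
    proof (intro nn_integral_mono)
      fix u
      show "(\<Sum>k\<in>F. indicator {0..\<tau>} u * ennreal (a k * gk n \<phi> p (nat \<bar>k\<bar>) u)) \<le> ennreal (?\<omega> powr p) * indicator {0..\<tau>} u"
      proof (cases "u \<in> {0..\<tau>}")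
        case True
        have "(\<Sum>k\<in>F. a k * gk n \<phi> p (nat \<bar>k\<bar>) u) \<le> (\<Sum>k\<in>F. \<phi> (of_int k * (u / real n)) powr p * norm (fourier_coeff f k) powr p)"
          by (intro sum_mono) (auto simp: a_def gk_even)
        also have "\<dots> \<le> ?\<omega> powr p"
          by (rule finite_sum_le_modulus[OF phi f p _ F]) (use True n in \<open>auto simp: divide_right_mono\<close>)
        finally have "ennreal (\<Sum>k\<in>F. a k * gk n \<phi> p (nat \<bar>k\<bar>) u) \<le> ennreal (?\<omega> powr p)"
          by (rule ennreal_leI)
        then show ?thesis using True a0 gk_nonneg
          by (simp add: sum_nonneg mult_nonneg_nonneg)
      next
        case False
        then show ?thesis by simp
      qed
    qed
    also have "\<dots> = ennreal (?\<omega> powr p) * emeasure ?\<mu> {0..\<tau>}"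
      by (subst nn_integral_cmult_indicator) auto
    also have "\<dots> \<le> ennreal (?\<omega> powr p) * ennreal (v \<tau> - v 0)"
      by (intro mult_left_mono LS_mass[OF v tau]) auto
    also have "\<dots> = ennreal W" unfolding W_def using Vset_pos[OF v]
      by (simp add: ennreal_mult mult.commute)
    finally show ?thesis using W0 by (simp add: ennreal_le_iff)
  qed
  have "tail n f p * i = infsum (\<lambda>k. a k * i) UNIV"
    unfolding tail_def a_def[symmetric] by (rule infsum_cmult_left[symmetric]) (use asum in auto)
  also have "\<dots> \<le> W"
    by (rule infsum_le_finite_sums) (use fin asum summable_on_cmult_left in auto)
  finally have "tail n f p * i \<le> W" .
  then show ?thesis unfolding W_def[symmetric] i using i by (subst ennreal_mult''[symmetric]) (auto intro: ennreal_leI)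
qed

end

lemma ennreal_div_zero_top: "0 < x \<Longrightarrow> ennreal x / 0 = top"
  by (simp add: divide_ennreal_def)

context
  fixes p \<tau> :: real and n :: nat and \<phi> :: "real \<Rightarrow> real"
  assumes p: "1 \<le> p" and tau: "0 < \<tau>" and n: "1 \<le> n" and phi: "\<phi> \<in> Phi"
begin

lemma E_pow_le_tail:
  assumes f: "f \<in> Sp p"
  shows "best_approx n f p powr p \<le> tail n f p"
proof -
  have T0: "0 \<le> tail n f p" unfolding tail_def by (rule infsum_nonneg) auto
  have "best_approx n f p powr p \<le> (tail n f p powr (1/p)) powr p"
    using best_approx_le_tail[OF f p n] best_approx_nonneg p by (intro powr_mono2) auto
  also have "\<dots> = tail n f p" using T0 p by (simp add: powr_powr)
  finally show ?thesis .
qed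

lemma omega_zero_E:
  assumes f: "f \<in> Sp p" and w: "modulus \<phi> f (\<tau> / real n) p \<le> 0"
  shows "best_approx n f p = 0"
proof -
  have z: "fourier_coeff f k = 0" if "k \<noteq> 0" for k
    by (rule modulus_zero[OF phi f p _ w that]) (use tau n in auto)
  have "tail n f p = 0" unfolding tail_def
    by (rule infsum_0) (use z n in auto)
  then have "best_approx n f p \<le> 0" using best_approx_le_tail[OF f p n] by simp
  then show ?thesis using best_approx_nonneg[of n f p] by simp
qed

lemma ratio_bound:
  assumes f: "f \<in> Sp p" and v: "v \<in> Vset \<tau>" and w: "0 < modulus \<phi> f (\<tau> / real n) p"
  shows "ennreal (best_approx n f p powr p / modulus \<phi> f (\<tau> / real n) p powr p) \<le> ratio n \<phi> p \<tau> v"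
proof -
  let ?E = "best_approx n f p" and ?w = "modulus \<phi> f (\<tau> / real n) p" and ?I = "I_fun n \<phi> p \<tau> v"
  have vp: "0 < v \<tau> - v 0" using Vset_pos[OF v] by simp
  have core: "ennreal (tail n f p) * ?I \<le> ennreal ((v \<tau> - v 0) * ?w powr p)"
    by (rule part1_core[OF p tau n phi f v])
  show ?thesis
  proof (cases "?I = 0")
    case True
    then show ?thesis unfolding ratio_def using vp by (simp add: ennreal_div_zero_top)
  next
    case False
    have lt: "?I < top" using I_fin[OF p tau n phi v] by (meson ennreal_less_top le_less_trans)
    obtain i where i: "?I = ennreal i" "0 \<le> i"
      using lt by (cases ?I rule: ennreal_cases) auto
    have ipos: "0 < i" using False i by auto
    have "ennreal (tail n f p * i) \<le> ennreal ((v \<tau> - v 0) * ?w powr p)"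
      using core i by (simp add: ennreal_mult'')
    then have "tail n f p * i \<le> (v \<tau> - v 0) * ?w powr p"
      using vp by (simp add: ennreal_le_iff)
    then have "?E powr p * i \<le> (v \<tau> - v 0) * ?w powr p"
      using E_pow_le_tail[OF f] ipos by (meson mult_right_mono less_imp_le order_trans)
    then have "?E powr p / ?w powr p \<le> (v \<tau> - v 0) / i"
      using ipos w by (simp add: field_simps)
    then have "ennreal (?E powr p / ?w powr p) \<le> ennreal ((v \<tau> - v 0) / i)"
      by (rule ennreal_leI)
    also have "\<dots> = ratio n \<phi> p \<tau> v"
      unfolding ratio_def i using ipos vp by (simp add: divide_ennreal)
    finally show ?thesis .
  qed
qed

lemma part1:
  assumes f: "f \<in> Sp p"
  shows "ennreal (best_approx n f p) \<le> C_const n \<phi> p \<tau> * ennreal (modulus \<phi> f (\<tau> / real n) p)"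
proof -
  let ?E = "best_approx n f p" and ?w = "modulus \<phi> f (\<tau> / real n) p"
  let ?m = "INF w\<in>Vset \<tau>. ratio n \<phi> p \<tau> w"
  have w0: "0 \<le> ?w" by (rule modulus_nonneg[OF phi f p]) (use tau in simp)
  show ?thesis
  proof (cases "?w = 0")
    case True
    then show ?thesis using omega_zero_E[OF f] by simp
  next
    case False
    then have wp: "0 < ?w" using w0 by simp
    have le: "ennreal (?E powr p / ?w powr p) \<le> ?m"
      by (rule INF_greatest) (rule ratio_bound[OF f _ wp])
    show ?thesis
    proof (cases "?m = top")
      case True
      then show ?thesis unfolding C_const_def Let_def using wp by (simp add: ennreal_mult_top)
    next
      case False
      obtain m where m: "?m = ennreal m" "0 \<le> m"
        using False by (cases ?m rule: ennreal_cases) auto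
      have "?E powr p / ?w powr p \<le> m" using le m by (simp add: ennreal_le_iff)
      then have "?E powr p \<le> m * ?w powr p" using wp by (simp add: field_simps)
      then have "(?E powr p) powr (1/p) \<le> (m * ?w powr p) powr (1/p)"
        by (intro powr_mono2) (use p in auto)
      also have "(m * ?w powr p) powr (1/p) = m powr (1/p) * ?w"
        using m wp p by (simp add: powr_mult powr_powr)
      finally have "?E \<le> m powr (1/p) * ?w"
        using best_approx_nonneg[of n f p] p by (simp add: powr_powr)
      then have "ennreal ?E \<le> ennreal (m powr (1/p) * ?w)" by (rule ennreal_leI)
      also have "\<dots> = C_const n \<phi> p \<tau> * ennreal ?w"
        unfolding C_const_def Let_def using False m wp by (simp add: ennreal_mult)
      finally show ?thesis .
    qed
  qed
qed

end

definition disc :: "real set \<Rightarrow> real set \<Rightarrow> (real \<Rightarrow> real) \<Rightarrow> bool" where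
  "disc S U w \<longleftrightarrow> finite U \<and> U \<subseteq> S \<and> (\<forall>x\<in>U. 0 \<le> w x) \<and> sum w U = 1"

lemma mix_sum:
  fixes l :: real and w h :: "real \<Rightarrow> real"
  assumes "finite U"
  shows "(\<Sum>x\<in>insert u U. ((1 - l) * (if x \<in> U then w x else 0) + l * (if x = u then 1 else 0)) * h x)
       = (1 - l) * (\<Sum>x\<in>U. w x * h x) + l * h u"
proof -
  have "(\<Sum>x\<in>insert u U. ((1 - l) * (if x \<in> U then w x else 0) + l * (if x = u then 1 else 0)) * h x)
      = (1 - l) * (\<Sum>x\<in>insert u U. (if x \<in> U then w x * h x else 0)) + l * (\<Sum>x\<in>insert u U. (if x = u then h x else 0))"
  proof -
    have "\<And>x. ((1 - l) * (if x \<in> U then w x else 0) + l * (if x = u then 1 else 0)) * h x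
       = (1 - l) * (if x \<in> U then w x * h x else 0) + l * (if x = u then h x else 0)"
      by (auto simp: algebra_simps)
    then show ?thesis by (simp only: sum.distrib sum_distrib_left)
  qed
  also have "(\<Sum>x\<in>insert u U. (if x \<in> U then w x * h x else 0)) = (\<Sum>x\<in>U. w x * h x)"
    using assms by (simp add: sum.If_cases Int_absorb1 subset_insertI)
  also have "(\<Sum>x\<in>insert u U. (if x = u then h x else 0)) = h u"
    using assms by (simp add: sum.delta)
  finally show ?thesis .
qed

lemma mix_disc:
  assumes "disc S U w" "u \<in> S" "0 \<le> l" "l \<le> 1"
  shows "disc S (insert u U) (\<lambda>x. (1 - l) * (if x \<in> U then w x else 0) + l * (if x = u then 1 else 0))"
proof -
  have fin: "finite U" using assms(1) by (simp add: disc_def)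
  have "(\<Sum>x\<in>insert u U. ((1 - l) * (if x \<in> U then w x else 0) + l * (if x = u then 1 else 0)) * 1)
       = (1 - l) * (\<Sum>x\<in>U. w x * 1) + l * 1" by (rule mix_sum[OF fin])
  then show ?thesis using assms unfolding disc_def by (auto intro!: add_nonneg_nonneg mult_nonneg_nonneg)
qed

lemma sq_max_le: "0 \<le> l \<Longrightarrow> (max 0 (x - l * d))\<^sup>2 \<le> (max 0 x - l * d)\<^sup>2"
  for x l d :: real
  by (cases "x - l * d \<le> 0") (auto intro!: power_mono simp: max_def)


lemma disc_G_bounds:
  assumes "disc S U w" "\<And>u. u \<in> S \<Longrightarrow> 0 \<le> h u \<and> h u \<le> B"
  shows "0 \<le> (\<Sum>x\<in>U. w x * h x)" "(\<Sum>x\<in>U. w x * h x) \<le> B"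
proof -
  have U: "finite U" "U \<subseteq> S" "\<And>x. x \<in> U \<Longrightarrow> 0 \<le> w x" "sum w U = 1"
    using assms(1) by (auto simp: disc_def)
  show "0 \<le> (\<Sum>x\<in>U. w x * h x)" using U assms(2) by (auto intro!: sum_nonneg)
  have "(\<Sum>x\<in>U. w x * h x) \<le> (\<Sum>x\<in>U. w x * B)"
    using U assms(2) by (auto intro!: sum_mono mult_left_mono)
  also have "\<dots> = B" using U by (simp add: sum_distrib_right[symmetric])
  finally show "(\<Sum>x\<in>U. w x * h x) \<le> B" .
qed

lemma dichotomy:
  fixes g :: "nat \<Rightarrow> real \<Rightarrow> real" and K :: "nat set" and S :: "real set"
  assumes K: "finite K" and S: "S \<noteq> {}" and gB: "\<And>k u. u \<in> S \<Longrightarrow> 0 \<le> g k u \<and> g k u \<le> B"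
    and tt: "t < t'"
  shows "(\<exists>a. (\<forall>k\<in>K. 0 \<le> a k) \<and> sum a K = 1 \<and> (\<forall>u\<in>S. (\<Sum>k\<in>K. a k * g k u) \<le> t')) \<or>
         (\<forall>\<delta>>0. \<exists>U w. disc S U w \<and> (\<forall>k\<in>K. t - \<delta> \<le> (\<Sum>x\<in>U. w x * g k x)))"
proof (rule disjCI)
  assume "\<not> (\<forall>\<delta>>0. \<exists>U w. disc S U w \<and> (\<forall>k\<in>K. t - \<delta> \<le> (\<Sum>x\<in>U. w x * g k x)))"
  then obtain \<delta> where dpos: "\<delta> > 0" and H: "\<And>U w. disc S U w \<Longrightarrow> \<exists>k\<in>K. (\<Sum>x\<in>U. w x * g k x) < t - \<delta>"
    by (auto simp: not_le)
  define G where "G U w k = (\<Sum>x\<in>U. w x * g k x)" for U w k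
  define D where "D U w = (\<Sum>k\<in>K. (max 0 (t - G U w k))\<^sup>2)" for U w
  define Ds where "Ds = {D U w | U w. disc S U w}"
  obtain u0 where u0: "u0 \<in> S" using S by auto
  have "disc S {u0} (\<lambda>_. 1)" using u0 by (simp add: disc_def)
  then have Dsne: "Ds \<noteq> {}" unfolding Ds_def by blast
  have D0: "0 \<le> D U w" for U w unfolding D_def by (auto intro!: sum_nonneg)
  have bddD: "bdd_below Ds" unfolding Ds_def by (rule bdd_belowI[where m=0]) (auto simp: D0)
  define D0 where "D0 = Inf Ds"
  have D0le: "D0 \<le> D U w" if "disc S U w" for U w
    unfolding D0_def by (rule cInf_lower[OF _ bddD]) (use that Ds_def in blast)
  have B0: "0 \<le> B" using gB[OF u0] by (meson order_trans)
  define Q where "Q = real (card K) * B\<^sup>2"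
  have Q0: "0 \<le> Q" by (simp add: Q_def)
  define l where "l = min 1 ((t' - t) * \<delta> / (Q + 1))"
  have lpos: "0 < l" "l \<le> 1" using tt dpos Q0 by (auto simp: l_def)
  have lQ: "l * Q \<le> (t' - t) * \<delta>"
  proof -
    have "l * Q \<le> (t' - t) * \<delta> / (Q + 1) * Q" using Q0 by (intro mult_right_mono) (auto simp: l_def)
    also have "\<dots> \<le> (t' - t) * \<delta>" using Q0 tt dpos by (simp add: field_simps)
    finally show ?thesis .
  qed
  define \<eta> where "\<eta> = l * (t' - t) * \<delta>"
  have etapos: "0 < \<eta>" using lpos tt dpos by (simp add: \<eta>_def)
  have "\<exists>x\<in>Ds. x < D0 + \<eta>"
    using cInf_less_iff[OF Dsne bddD, of "D0 + \<eta>"] etapos by (simp add: D0_def)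
  then obtain U w where Uw: "disc S U w" and Dlt: "D U w < D0 + \<eta>" unfolding Ds_def by blast
  have Ufin: "finite U" using Uw by (simp add: disc_def)
  define a where "a k = max 0 (t - G U w k)" for k
  have a0: "0 \<le> a k" for k by (simp add: a_def)
  define sa where "sa = sum a K"
  obtain k0 where k0: "k0 \<in> K" "G U w k0 < t - \<delta>" using H[OF Uw] unfolding G_def by blast
  have "\<delta> < a k0" using k0 by (simp add: a_def)
  also have "a k0 \<le> sa" unfolding sa_def using K k0 a0 by (intro member_le_sum) auto
  finally have sa: "\<delta> < sa" .
  have Gb: "0 \<le> G U w k" "G U w k \<le> B" for k
    using disc_G_bounds[OF Uw, of "g k" B] gB unfolding G_def by auto
  have aG: "a k * G U w k \<le> a k * t" for k
    by (cases "G U w k < t") (auto simp: a_def)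
  show "\<exists>a. (\<forall>k\<in>K. 0 \<le> a k) \<and> sum a K = 1 \<and> (\<forall>u\<in>S. (\<Sum>k\<in>K. a k * g k u) \<le> t')"
  proof (intro exI[of _ "\<lambda>k. a k / sa"] conjI ballI)
    show "0 \<le> a k / sa" for k using a0 sa dpos by simp
    show "(\<Sum>k\<in>K. a k / sa) = 1" using sa dpos by (simp add: sum_divide_distrib[symmetric] sa_def)
    fix u assume u: "u \<in> S"
    define d where "d k = g k u - G U w k" for k
    define w' where "w' x = (1 - l) * (if x \<in> U then w x else 0) + l * (if x = u then 1 else 0)" for x
    have disc': "disc S (insert u U) w'" unfolding w'_def by (rule mix_disc[OF Uw u]) (use lpos in auto)
    have Gmix: "G (insert u U) w' k = G U w k + l * d k" for k
      unfolding G_def w'_def d_def mix_sum[OF Ufin] by (simp add: algebra_simps)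
    have "D U w - \<eta> < D0" using Dlt by simp
    also have "D0 \<le> D (insert u U) w'" by (rule D0le[OF disc'])
    also have "\<dots> \<le> (\<Sum>k\<in>K. (a k - l * d k)\<^sup>2)"
      unfolding D_def Gmix a_def
      by (intro sum_mono) (use sq_max_le[of l "t - G U w _" "d _"] lpos in \<open>simp add: algebra_simps\<close>)
    also have "\<dots> = (\<Sum>k\<in>K. (a k)\<^sup>2) - 2 * l * (\<Sum>k\<in>K. a k * d k) + l\<^sup>2 * (\<Sum>k\<in>K. (d k)\<^sup>2)"
      by (simp add: power2_diff sum.distrib sum_subtractf sum_distrib_left algebra_simps)
    also have "(\<Sum>k\<in>K. (a k)\<^sup>2) = D U w" unfolding D_def a_def ..
    finally have ineq: "2 * l * (\<Sum>k\<in>K. a k * d k) < \<eta> + l\<^sup>2 * (\<Sum>k\<in>K. (d k)\<^sup>2)" by simp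
    have dsq: "(\<Sum>k\<in>K. (d k)\<^sup>2) \<le> Q"
    proof -
      have "(\<Sum>k\<in>K. (d k)\<^sup>2) \<le> (\<Sum>k\<in>K. B\<^sup>2)"
      proof (intro sum_mono)
        fix k
        have "\<bar>d k\<bar> \<le> B" using gB[OF u, of k] Gb[of k] by (auto simp: d_def)
        then show "(d k)\<^sup>2 \<le> B\<^sup>2" by (metis abs_le_square_iff abs_of_nonneg B0)
      qed
      then show ?thesis by (simp add: Q_def)
    qed
    have "2 * l * (\<Sum>k\<in>K. a k * d k) < \<eta> + l\<^sup>2 * Q"
      using ineq dsq lpos by (smt (verit) mult_left_mono zero_le_power2)
    then have "2 * l * (\<Sum>k\<in>K. a k * d k) < l * ((t' - t) * \<delta>) + l * (l * Q)"
      by (simp add: \<eta>_def power2_eq_square algebra_simps)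
    also have "\<dots> \<le> l * ((t' - t) * \<delta>) + l * ((t' - t) * \<delta>)"
      using lQ lpos by (intro add_left_mono mult_left_mono) auto
    finally have ad: "(\<Sum>k\<in>K. a k * d k) < (t' - t) * \<delta>" using lpos by (simp add: mult.commute)
    have "(\<Sum>k\<in>K. a k * g k u) = (\<Sum>k\<in>K. a k * G U w k) + (\<Sum>k\<in>K. a k * d k)"
      by (simp add: d_def sum.distrib[symmetric] algebra_simps)
    also have "(\<Sum>k\<in>K. a k * G U w k) \<le> (\<Sum>k\<in>K. a k * t)" by (intro sum_mono aG)
    also have "(\<Sum>k\<in>K. a k * t) = t * sa" by (simp add: sa_def sum_distrib_left mult.commute)
    finally have "(\<Sum>k\<in>K. a k * g k u) < t * sa + (t' - t) * \<delta>" using ad by simp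
    also have "\<dots> \<le> t * sa + (t' - t) * sa" using tt sa by (intro add_left_mono mult_left_mono) auto
    also have "\<dots> = t' * sa" by (simp add: algebra_simps)
    finally have "(\<Sum>k\<in>K. a k * g k u) \<le> t' * sa" by simp
    then show "(\<Sum>k\<in>K. a k / sa * g k u) \<le> t'"
      using sa dpos by (simp add: sum_divide_distrib[symmetric] field_simps)
  qed
qed

definition dmeas :: "real set \<Rightarrow> (real \<Rightarrow> real) \<Rightarrow> real measure" where
  "dmeas U w = distr (point_measure U (\<lambda>x. ennreal (w x))) borel (\<lambda>x. x)"

lemma dmeas_meas: "(\<lambda>x. x) \<in> point_measure U f \<rightarrow>\<^sub>M borel"
  by simp

lemma dmeas_rd:
  assumes "disc S U w"
  shows "real_distribution (dmeas U w)"
proof -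
  have U: "finite U" "\<And>x. x \<in> U \<Longrightarrow> 0 \<le> w x" "sum w U = 1"
    using assms by (auto simp: disc_def)
  have "emeasure (point_measure U (\<lambda>x. ennreal (w x))) (space (point_measure U (\<lambda>x. ennreal (w x)))) = 1"
    using U by (simp add: emeasure_point_measure_finite space_point_measure)
  then have "prob_space (point_measure U (\<lambda>x. ennreal (w x)))" by (rule prob_spaceI)
  then show ?thesis unfolding dmeas_def
    by (rule prob_space.real_distribution_distr) simp
qed

lemma dmeas_int:
  assumes "disc S U w" and h: "h \<in> borel_measurable borel" "\<And>x. 0 \<le> h x"
  shows "integral\<^sup>L (dmeas U w) h = (\<Sum>x\<in>U. w x * h x)"
proof -
  have U: "finite U" "\<And>x. x \<in> U \<Longrightarrow> 0 \<le> w x" "sum w U = 1"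
    using assms by (auto simp: disc_def)
  have hm: "h \<in> borel_measurable (dmeas U w)" using h by (simp add: dmeas_def)
  have "integral\<^sup>L (dmeas U w) h = enn2real (\<integral>\<^sup>+ x. ennreal (h x) \<partial>dmeas U w)"
    by (rule integral_eq_nn_integral[OF hm]) (use h in auto)
  also have "(\<integral>\<^sup>+ x. ennreal (h x) \<partial>dmeas U w) = (\<integral>\<^sup>+ x. ennreal (h x) \<partial>point_measure U (\<lambda>x. ennreal (w x)))"
    unfolding dmeas_def by (subst nn_integral_distr) (use h in auto)
  also have "\<dots> = (\<Sum>x\<in>U. ennreal (w x) * ennreal (h x))"
    by (rule nn_integral_point_measure_finite[OF U(1)])
  also have "\<dots> = ennreal (\<Sum>x\<in>U. w x * h x)"
    using U h by (simp add: ennreal_mult[symmetric] sum_nonneg)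
  finally show ?thesis using U h by (simp add: sum_nonneg)
qed

lemma dmeas_out:
  assumes "disc S U w" "A \<in> sets borel" "A \<inter> S = {}"
  shows "emeasure (dmeas U w) A = 0"
proof -
  have U: "finite U" "U \<subseteq> S" using assms by (auto simp: disc_def)
  have "emeasure (dmeas U w) A = emeasure (point_measure U (\<lambda>x. ennreal (w x))) (A \<inter> U)"
    unfolding dmeas_def using assms(2) by (subst emeasure_distr) (auto simp: space_point_measure)
  also have "A \<inter> U = {}" using U assms(3) by auto
  finally show ?thesis by simp
qed

lemma compact_limit:
  fixes g :: "nat \<Rightarrow> real \<Rightarrow> real" and \<tau> t :: real and n :: nat
  assumes tau: "0 < \<tau>"
    and gc: "\<And>k x. isCont (g k) x" and gB: "\<And>k x. 0 \<le> g k x \<and> g k x \<le> B"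
    and seq: "\<And>N. disc {0..\<tau>} (U N) (W N)"
    and lb: "\<And>N k. n \<le> k \<Longrightarrow> k \<le> N \<Longrightarrow> t - 1 / real (Suc N) \<le> (\<Sum>x\<in>U N. W N x * g k x)"
  shows "\<exists>M. real_distribution M \<and> emeasure M (UNIV - {0..\<tau>}) = 0 \<and> (\<forall>k\<ge>n. t \<le> integral\<^sup>L M (g k))"
proof -
  define \<mu> where "\<mu> N = dmeas (U N) (W N)" for N
  have rd: "real_distribution (\<mu> N)" for N unfolding \<mu>_def by (rule dmeas_rd[OF seq])
  have gm: "g k \<in> borel_measurable borel" for k
    by (rule borel_measurable_continuous_onI) (simp add: continuous_at_imp_continuous_on gc)
  have int: "integral\<^sup>L (\<mu> N) h = (\<Sum>x\<in>U N. W N x * h x)" if "h \<in> borel_measurable borel" "\<And>x. 0 \<le> h x" for N h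
    unfolding \<mu>_def by (rule dmeas_int[OF seq that])
  have tight: "tight \<mu>"
    unfolding tight_def
  proof (intro conjI)
    show "\<forall>N. real_distribution (\<mu> N)" using rd by blast
    show "\<forall>e>0. \<exists>a b::real. a < b \<and> (\<forall>N. measure (\<mu> N) {a<..b} > 1 - e)"
    proof (intro allI impI)
    fix e :: real assume e: "e > 0"
    show "\<exists>a b::real. a < b \<and> (\<forall>N. measure (\<mu> N) {a<..b} > 1 - e)"
    proof (rule exI[where x="-1::real"], rule exI[where x=\<tau>], intro conjI allI)
      show "-1 < \<tau>" using tau by simp
      fix N
      interpret real_distribution "\<mu> N" by (rule rd)
      have "emeasure (\<mu> N) (UNIV - {-1<..\<tau>}) = 0"
        unfolding \<mu>_def by (rule dmeas_out[OF seq]) auto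
      then have "measure (\<mu> N) (UNIV - {-1<..\<tau>}) = 0" by (simp add: measure_def)
      then have "measure (\<mu> N) {-1<..\<tau>} = 1"
        using prob_compl[of "UNIV - {-1<..\<tau>}"] by (simp add: Diff_Diff_Int)
      then show "1 - e < measure (\<mu> N) {-1<..\<tau>}" using e by simp
    qed
    qed
  qed
  obtain r M where r: "strict_mono r" and M: "real_distribution M" and wc: "weak_conv_m (\<mu> \<circ> id \<circ> r) M"
    using tight_imp_convergent_subsubsequence[OF tight, of id] by (auto simp: strict_mono_def)
  have conv: "(\<lambda>j. integral\<^sup>L (\<mu> (r j)) h) \<longlonglongrightarrow> integral\<^sup>L M h"
    if "\<And>x. isCont h x" "\<And>x. norm (h x) \<le> C" for h :: "real \<Rightarrow> real" and C :: real
  proof -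
    have A: "\<And>j. real_distribution ((\<mu> \<circ> id \<circ> r) j)" using rd by simp
    have hc: "\<And>x. isCont h x" and hb: "\<And>x. norm (h x) \<le> C" using that by auto
    show ?thesis using weak_conv_imp_integral_bdd_continuous_conv[OF A M wc hc hb] by simp
  qed
  have lim1: "(\<lambda>j. t - 1 / real (Suc (r j))) \<longlonglongrightarrow> t"
  proof -
    have "(\<lambda>j. 1 / real (Suc (r j))) \<longlonglongrightarrow> 0"
    proof (rule LIMSEQ_subseq_LIMSEQ[unfolded o_def, OF _ r])
      show "(\<lambda>j. 1 / real (Suc j)) \<longlonglongrightarrow> 0"
        using LIMSEQ_Suc[OF lim_inverse_n'] by simp
    qed
    from tendsto_diff[OF tendsto_const[of t] this] show ?thesis by simp
  qed
  have main: "t \<le> integral\<^sup>L M (g k)" if k: "n \<le> k" for k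
  proof (rule LIMSEQ_le[OF lim1 conv[OF gc]])
    show "norm (g k x) \<le> B" for x using gB[of k x] by simp
    have "t - 1 / real (Suc (r j)) \<le> integral\<^sup>L (\<mu> (r j)) (g k)" if "j \<ge> k" for j
    proof -
      have "k \<le> r j" using seq_suble[OF r, of j] that by simp
      then show ?thesis using lb[of k "r j"] k int[OF gm, of k "r j"] gB by auto
    qed
    then show "\<exists>N. \<forall>j\<ge>N. t - 1 / real (Suc (r j)) \<le> integral\<^sup>L (\<mu> (r j)) (g k)" by blast
  qed
  define h where "h x = min 1 (max 0 (- x) + max 0 (x - \<tau>))" for x
  have hc: "isCont h x" for x unfolding h_def by (intro continuous_intros)
  have h0: "0 \<le> h x" for x by (simp add: h_def)
  have hb: "norm (h x) \<le> 1" for x by (simp add: h_def)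
  have hm: "h \<in> borel_measurable borel"
    by (rule borel_measurable_continuous_onI) (simp add: continuous_at_imp_continuous_on hc)
  have hz: "h x = 0 \<longleftrightarrow> x \<in> {0..\<tau>}" for x using tau by (auto simp: h_def min_def max_def)
  have "integral\<^sup>L (\<mu> (r j)) h = 0" for j
  proof -
    have "(\<Sum>x\<in>U (r j). W (r j) x * h x) = 0"
      using seq[of "r j"] hz by (auto simp: disc_def intro!: sum.neutral)
    then show ?thesis using int[OF hm h0] by simp
  qed
  then have "integral\<^sup>L M h = 0"
    using conv[OF hc hb] by (simp add: LIMSEQ_const_iff)
  moreover interpret Mr: real_distribution M by (rule M)
  have hi: "integrable M h"
    by (rule Mr.integrable_const_bound[where B=1]) (use hb hm in auto)
  ultimately have "AE x in M. h x = 0"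
    using integral_nonneg_eq_0_iff_AE[OF hi] h0 by simp
  then have "AE x in M. x \<in> {0..\<tau>}" using hz by simp
  then have "emeasure M (UNIV - {0..\<tau>}) = 0"
    by (subst (asm) AE_iff_measurable[where N="UNIV - {0..\<tau>}"]) auto
  then show ?thesis using M main by blast
qed

lemma dist_to_v:
  assumes M: "real_distribution M" and supp: "emeasure M (UNIV - {0..\<tau>}) = 0" and tau: "0 < \<tau>"
  defines "v \<equiv> (\<lambda>x. if x \<le> 0 then 0 else cdf M x)"
  shows "v \<in> Vset \<tau>" "v \<tau> - v 0 = 1" "LS_measure \<tau> v = M"
proof -
  interpret real_distribution M by (rule M)
  have null: "measure M A = 0" if "A \<subseteq> UNIV - {0..\<tau>}" "A \<in> sets borel" for A
  proof -
    have "emeasure M A \<le> emeasure M (UNIV - {0..\<tau>})" by (rule emeasure_mono) (use that in auto)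
    then show ?thesis using supp by (simp add: measure_def)
  qed
  have cdf_neg: "cdf M x = 0" if "x < 0" for x
  proof -
    have "{..x} \<subseteq> UNIV - {0..\<tau>}" using that by auto
    then show ?thesis unfolding cdf_def using null[of "{..x}"] by auto
  qed
  have cdf_tau: "cdf M x = 1" if "\<tau> \<le> x" for x
  proof -
    have "{x<..} \<subseteq> UNIV - {0..\<tau>}" using that by auto
    then have "measure M {x<..} = 0" using null[of "{x<..}"] by auto
    moreover have "measure M {..x} + measure M {x<..} = measure M UNIV"
    proof -
      have "{..x} \<union> {x<..} = UNIV" by auto
      then show ?thesis by (subst finite_measure_Union[symmetric]) auto
    qed
    ultimately show ?thesis using prob_space space_eq_univ by (simp add: cdf_def)
  qed
  have v0: "v 0 = 0" and vt: "v \<tau> = 1" using tau cdf_tau by (auto simp: v_def)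
  show "v \<tau> - v 0 = 1" using v0 vt by simp
  show "v \<in> Vset \<tau>" unfolding Vset_def
  proof (intro CollectI conjI)
    show "mono_on {0..\<tau>} v"
      by (rule mono_onI) (auto simp: v_def cdf_nonneg cdf_nondecreasing)
    show "bounded (v ` {0..\<tau>})"
      by (rule boundedI[where B=1]) (auto simp: v_def cdf_nonneg cdf_bounded_prob)
    show "\<exists>a\<in>{0..\<tau>}. \<exists>b\<in>{0..\<tau>}. v a \<noteq> v b"
      using tau v0 vt by (intro bexI[of _ 0] bexI[of _ \<tau>]) auto
  qed
  have LS: "LS_dist \<tau> v = cdf M"
  proof
    fix x
    show "LS_dist \<tau> v x = cdf M x"
    proof (cases "x < 0")
      case True then show ?thesis using v0 cdf_neg by (simp add: LS_dist_def)
    next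
      case False
      show ?thesis
      proof (cases "\<tau> \<le> x")
        case True then show ?thesis using False vt cdf_tau by (simp add: LS_dist_def)
      next
        case False2: False
        have eq: "v ` {x<..\<tau>} = cdf M ` {x<..\<tau>}"
          using False by (auto simp: v_def image_def)
        have ne: "cdf M ` {x<..\<tau>} \<noteq> {}" using False2 by auto
        have bdd: "bdd_below (cdf M ` {x<..\<tau>})" by (rule bdd_belowI[where m=0]) (auto simp: cdf_nonneg)
        have ge: "cdf M x \<le> Inf (cdf M ` {x<..\<tau>})"
          by (rule cInf_greatest[OF ne]) (auto intro: cdf_nondecreasing)
        have le: "Inf (cdf M ` {x<..\<tau>}) \<le> cdf M x + e" if e: "e > 0" for e
        proof -
          obtain d where d: "d > 0" "cdf M (x + d) - cdf M x < e"
            using iffD1[OF continuous_at_right_real_increasing cdf_is_right_cont] e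
            by (meson cdf_nondecreasing)
          define d' where "d' = min d (\<tau> - x)"
          have d': "d' > 0" "d' \<le> d" "x + d' \<le> \<tau>" using d False2 by (auto simp: d'_def)
          have "Inf (cdf M ` {x<..\<tau>}) \<le> cdf M (x + d')"
            by (rule cInf_lower[OF _ bdd]) (use d' in auto)
          also have "\<dots> \<le> cdf M (x + d)" using d' by (intro cdf_nondecreasing) auto
          finally show ?thesis using d by simp
        qed
        have "Inf (cdf M ` {x<..\<tau>}) \<le> cdf M x"
          by (rule field_le_epsilon) (use le in auto)
        then show ?thesis using ge False False2 eq by (simp add: LS_dist_def)
      qed
    qed
  qed
  have rd: "real_distribution (interval_measure (cdf M))"
    by (rule real_distribution_interval_measure)
       (auto intro: cdf_nondecreasing cdf_is_right_cont cdf_lim_at_bot cdf_lim_at_top_prob)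
  have "cdf (interval_measure (cdf M)) = cdf M"
    by (rule cdf_interval_measure) (auto intro: cdf_nondecreasing cdf_is_right_cont cdf_lim_at_bot)
  then have "interval_measure (cdf M) = M" by (rule cdf_unique[OF rd M])
  then show "LS_measure \<tau> v = M" unfolding LS_measure_def LS .
qed

context
  fixes p \<tau> :: real and n :: nat and \<phi> :: "real \<Rightarrow> real"
  assumes p: "1 \<le> p" and tau: "0 < \<tau>" and n: "1 \<le> n" and phi: "\<phi> \<in> Phi"
begin

lemma dist_ratio:
  assumes M: "real_distribution M" and supp: "emeasure M (UNIV - {0..\<tau>}) = 0"
    and t: "0 < t" and lb: "\<And>k. n \<le> k \<Longrightarrow> t \<le> integral\<^sup>L M (gk n \<phi> p k)"
  shows "\<exists>v\<in>Vset \<tau>. ratio n \<phi> p \<tau> v \<le> ennreal (1 / t)"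
proof -
  interpret Mr: real_distribution M by (rule M)
  define v where "v = (\<lambda>x. if x \<le> 0 then 0 else cdf M x)"
  have v: "v \<in> Vset \<tau>" "v \<tau> - v 0 = 1" "LS_measure \<tau> v = M"
    using dist_to_v[OF M supp tau] unfolding v_def by auto
  have AE: "AE x in M. x \<in> {0..\<tau>}"
    using supp by (subst AE_iff_measurable[where N="UNIV - {0..\<tau>}"]) auto
  have Ige: "ennreal t \<le> I_fun n \<phi> p \<tau> v"
    unfolding I_fun_gk v(3)
  proof (rule INF_greatest)
    fix k assume "k \<in> {k. n \<le> k}"
    then have k: "n \<le> k" by simp
    have int: "integrable M (gk n \<phi> p k)"
      by (rule Mr.integrable_const_bound[where B="Bp p \<phi>"])
         (use Bp[OF p tau n phi] gk_nonneg[OF p tau n phi] gk_borel[OF p tau n phi] in auto)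
    have "(\<integral>\<^sup>+ u. indicator {0..\<tau>} u * ennreal (gk n \<phi> p k u) \<partial>M) = (\<integral>\<^sup>+ u. ennreal (gk n \<phi> p k u) \<partial>M)"
      by (rule nn_integral_cong_AE) (use AE in auto)
    also have "\<dots> = ennreal (integral\<^sup>L M (gk n \<phi> p k))"
      by (rule nn_integral_eq_integral[OF int]) (auto simp: gk_nonneg[OF p tau n phi])
    finally show "ennreal t \<le> (\<integral>\<^sup>+ u. indicator {0..\<tau>} u * ennreal (gk n \<phi> p k u) \<partial>M)"
      using lb[OF k] by (simp add: ennreal_leI)
  qed
  have "ratio n \<phi> p \<tau> v \<le> ennreal (1 / t)"
  proof (cases "I_fun n \<phi> p \<tau> v" rule: ennreal_cases)
    case (real i)
    then have "t \<le> i" using Ige by (simp add: ennreal_le_iff)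
    have e1: "ennreal 1 / ennreal i = ennreal (1 / i)" using t \<open>t \<le> i\<close> by (intro divide_ennreal) auto
    have "1 / i \<le> 1 / t" using t \<open>t \<le> i\<close> by (intro frac_le) auto
    then have "ennreal 1 / ennreal i \<le> ennreal (1 / t)" unfolding e1 by (rule ennreal_leI)
    then show ?thesis unfolding ratio_def v(2) real .
  next
    case top
    then show ?thesis unfolding ratio_def by simp
  qed
  then show ?thesis using v(1) by blast
qed

end

lemma cont_leb: "continuous_on UNIV (h::real\<Rightarrow>complex) \<Longrightarrow> h \<in> borel_measurable lebesgue"
  by (rule measurable_completion) (simp add: borel_measurable_continuous_onI)

lemma ee_periodic: "ee j (x + 2 * pi) = ee j x"
proof -
  have "ee j (x + 2 * pi) = ee j x * exp ((2 * of_int j * pi) * \<i>)"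
    unfolding ee_def by (simp add: exp_add[symmetric] algebra_simps)
  also have "exp ((2 * of_int j * pi) * \<i>) = 1" by (rule exp_integer_2pi) simp
  finally show ?thesis by simp
qed

lemma tp_Sp:
  assumes "finite J"
  shows "(\<lambda>x. \<Sum>j\<in>J. c j * ee j x) \<in> Sp p"
  unfolding Sp_def periodic_L_def
proof (intro CollectI conjI allI)
  show "(\<Sum>j\<in>J. c j * ee j (x + 2 * pi)) = (\<Sum>j\<in>J. c j * ee j x)" for x
    by (simp add: ee_periodic)
  show "set_integrable lebesgue {0..2 * pi} (\<lambda>x. \<Sum>j\<in>J. c j * ee j x)"
    by (rule absolutely_integrable_continuous_real) (intro continuous_intros)
  show "(\<lambda>k. norm (fourier_coeff (\<lambda>x. \<Sum>j\<in>J. c j * ee j x) k) powr p) summable_on UNIV"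
    by (rule fs_summable(1)[OF assms]) (simp add: fc_tp[OF assms])
qed

lemma tp_nonconst:
  assumes J: "finite J" and k0: "k0 \<in> J" "k0 \<noteq> 0" "c k0 \<noteq> 0"
  shows "\<not> (\<exists>c0. AE x in lebesgue. (\<Sum>j\<in>J. c j * ee j x) = c0)"
proof
  assume "\<exists>c0. AE x in lebesgue. (\<Sum>j\<in>J. c j * ee j x) = c0"
  then obtain c0 where ae: "AE x in lebesgue. (\<Sum>j\<in>J. c j * ee j x) = c0" by blast
  let ?f = "\<lambda>x. \<Sum>j\<in>J. c j * ee j x"
  let ?e = "\<lambda>x. exp (- \<i> * of_int k0 * of_real x)"
  have "(LINT x:{0..2*pi}|lebesgue. ?f x * ?e x) = (LINT x:{0..2*pi}|lebesgue. c0 * ?e x)"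
    by (rule set_lebesgue_integral_cong_AE)
       (auto intro!: cont_leb continuous_intros intro: AE_mp[OF ae])
  then have "fourier_coeff ?f k0 = fourier_coeff (\<lambda>x. c0) k0" unfolding fourier_coeff_def by simp
  then show False using k0 by (simp add: fc_tp[OF J] fc_const)
qed

context
  fixes p \<tau> :: real and n :: nat and \<phi> :: "real \<Rightarrow> real"
  assumes p: "1 \<le> p" and tau: "0 < \<tau>" and n: "1 \<le> n" and phi: "\<phi> \<in> Phi"
begin

lemma level_B:
  assumes a: "\<And>k. k \<in> {n..N} \<Longrightarrow> 0 \<le> a k" "sum a {n..N} = 1"
    and bd: "\<And>u. u \<in> {0..\<tau>} \<Longrightarrow> (\<Sum>k\<in>{n..N}. a k * gk n \<phi> p k u) \<le> t'"
    and t': "0 < t'"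
  shows "ennreal (1 / t') \<le> (INF w\<in>Vset \<tau>. ratio n \<phi> p \<tau> w)"
    and "ennreal (1 / t' powr (1/p)) \<le> K_const n \<phi> p \<tau>"
proof -
  define K where "K = {n..N}"
  define J where "J = int ` K"
  define c where "c j = complex_of_real (a (nat j) powr (1/p))" for j
  define f where "f = (\<lambda>x. \<Sum>j\<in>J. c j * ee j x)"
  have finJ: "finite J" by (simp add: J_def K_def)
  have injK: "inj_on int K" by simp
  have cpow: "norm (c (int k)) powr p = a k" if "k \<in> K" for k
    using a(1)[of k] that p by (simp add: c_def K_def powr_powr)
  have fS: "f \<in> Sp p" unfolding f_def by (rule tp_Sp[OF finJ])
  have Jge: "int n \<le> \<bar>j\<bar>" if "j \<in> J" for j using that by (auto simp: J_def K_def)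
  have sumJ: "(\<Sum>j\<in>J. norm (c j) powr p) = 1"
  proof -
    have "(\<Sum>j\<in>J. norm (c j) powr p) = (\<Sum>k\<in>K. norm (c (int k)) powr p)"
      unfolding J_def by (simp add: sum.reindex[OF injK])
    also have "\<dots> = (\<Sum>k\<in>K. a k)" by (rule sum.cong) (auto simp: cpow)
    finally show ?thesis using a(2) by (simp add: K_def)
  qed
  have E1: "1 \<le> best_approx n f p"
    using best_approx_ge_tp[OF finJ Jge p n, of c] sumJ unfolding f_def by simp
  have w_le: "modulus \<phi> f (\<tau> / real n) p \<le> t' powr (1/p)"
    unfolding f_def
  proof (rule modulus_tp_le[OF phi finJ _ p])
    show "j > 0" if "j \<in> J" for j using that n by (auto simp: J_def K_def)
    show "0 \<le> \<tau> / real n" using tau by simp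
    fix h assume h: "0 \<le> h" "h \<le> \<tau> / real n"
    have u: "real n * h \<in> {0..\<tau>}" using h n by (auto simp: field_simps)
    have "(\<Sum>j\<in>J. \<phi> (of_int j * h) powr p * norm (c j) powr p) = (\<Sum>k\<in>K. a k * gk n \<phi> p k (real n * h))"
      unfolding J_def using n by (simp add: sum.reindex[OF injK] cpow gk_def mult.commute cong: sum.cong)
    also have "\<dots> \<le> t'" using bd[OF u] by (simp add: K_def)
    finally show "(\<Sum>j\<in>J. \<phi> (of_int j * h) powr p * norm (c j) powr p) \<le> t'" .
  qed
  have w0: "0 < modulus \<phi> f (\<tau> / real n) p"
  proof (rule ccontr)
    assume "\<not> ?thesis"
    then have "best_approx n f p = 0" by (intro omega_zero_E[OF p tau n phi fS]) simp
    then show False using E1 by simp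
  qed
  let ?E = "best_approx n f p" and ?w = "modulus \<phi> f (\<tau> / real n) p"
  have "1 / t' \<le> ?E powr p / ?w powr p"
  proof -
    have "?w powr p \<le> (t' powr (1/p)) powr p" using w_le w0 p by (intro powr_mono2) auto
    also have "\<dots> = t'" using t' p by (simp add: powr_powr)
    finally have wt: "?w powr p \<le> t'" .
    have "1 \<le> ?E powr p" using E1 p by (metis ge_one_powr_ge_zero order_trans zero_le_one)
    then show ?thesis using wt w0 t' by (intro frac_le) auto
  qed
  then have "ennreal (1 / t') \<le> ennreal (?E powr p / ?w powr p)" by (rule ennreal_leI)
  also have "\<dots> \<le> (INF w\<in>Vset \<tau>. ratio n \<phi> p \<tau> w)"
    by (rule INF_greatest) (rule ratio_bound[OF p tau n phi fS _ w0])
  finally show "ennreal (1 / t') \<le> (INF w\<in>Vset \<tau>. ratio n \<phi> p \<tau> w)" .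
  obtain k0 where k0: "k0 \<in> K" "a k0 > 0"
  proof (rule ccontr)
    assume "\<not> thesis"
    then have "\<And>k. k \<in> K \<Longrightarrow> a k \<le> 0" using that by force
    then have "sum a K \<le> 0" by (intro sum_nonpos)
    then show False using a(2) by (simp add: K_def)
  qed
  have nc: "\<not> (\<exists>c0. AE x in lebesgue. f x = c0)"
    unfolding f_def
    by (rule tp_nonconst[OF finJ, of "int k0"]) (use k0 n p in \<open>auto simp: J_def K_def c_def\<close>)
  have "ennreal (1 / t' powr (1/p)) \<le> ennreal (?E / ?w)"
  proof (rule ennreal_leI)
    show "1 / t' powr (1/p) \<le> ?E / ?w" using E1 w_le w0 t' by (intro frac_le) auto
  qed
  also have "\<dots> = ennreal ?E / ennreal ?w" using w0 E1 by (simp add: divide_ennreal)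
  also have "\<dots> \<le> K_const n \<phi> p \<tau>" unfolding K_const_def
    by (rule SUP_upper) (use fS nc in auto)
  finally show "ennreal (1 / t' powr (1/p)) \<le> K_const n \<phi> p \<tau>" .
qed

end

lemma ennreal_dense_le:
  assumes y: "0 < y" and H: "\<And>x. 0 < x \<Longrightarrow> x < y \<Longrightarrow> ennreal x \<le> K"
  shows "ennreal y \<le> K"
proof (cases K rule: ennreal_cases)
  case (real k)
  have "y \<le> k"
  proof (rule dense_le_bounded[OF y])
    fix w assume "0 < w" "w < y"
    then show "w \<le> k" using H[of w] real by (simp add: ennreal_le_iff)
  qed
  then show ?thesis using real by (simp add: ennreal_leI)
next
  case top then show ?thesis by simp
qed

context
  fixes p \<tau> :: real and n :: nat and \<phi> :: "real \<Rightarrow> real"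
  assumes p: "1 \<le> p" and tau: "0 < \<tau>" and n: "1 \<le> n" and phi: "\<phi> \<in> Phi"
begin

lemma level_A:
  assumes t: "0 < t"
    and H: "\<And>N. \<exists>U w. disc {0..\<tau>} U w \<and> (\<forall>k. n \<le> k \<and> k \<le> N \<longrightarrow> t - 1 / real (Suc N) \<le> (\<Sum>x\<in>U. w x * gk n \<phi> p k x))"
  shows "\<exists>v\<in>Vset \<tau>. ratio n \<phi> p \<tau> v \<le> ennreal (1 / t)"
proof -
  from H obtain U W where UW: "\<And>N. disc {0..\<tau>} (U N) (W N) \<and> (\<forall>k. n \<le> k \<and> k \<le> N \<longrightarrow> t - 1 / real (Suc N) \<le> (\<Sum>x\<in>U N. W N x * gk n \<phi> p k x))"
    by metis
  have "\<exists>M. real_distribution M \<and> emeasure M (UNIV - {0..\<tau>}) = 0 \<and> (\<forall>k\<ge>n. t \<le> integral\<^sup>L M (gk n \<phi> p k))"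
    by (rule compact_limit[where g="gk n \<phi> p" and B="Bp p \<phi>" and U=U and W=W and n=n and t=t])
       (use tau gk_cont[OF p tau n phi] Bp[OF p tau n phi] gk_nonneg[OF p tau n phi] UW in auto)
  then obtain M where M: "real_distribution M" "emeasure M (UNIV - {0..\<tau>}) = 0" "\<forall>k\<ge>n. t \<le> integral\<^sup>L M (gk n \<phi> p k)"
    by blast
  show ?thesis by (rule dist_ratio[OF p tau n phi M(1,2) t]) (use M(3) in auto)
qed

lemma level_dich:
  assumes "t < t'"
  shows "(\<exists>a. (\<forall>k\<in>{n..N}. 0 \<le> a k) \<and> sum a {n..N} = 1 \<and> (\<forall>u\<in>{0..\<tau>}. (\<Sum>k\<in>{n..N}. a k * gk n \<phi> p k u) \<le> t')) \<or>
         (\<forall>\<delta>>0. \<exists>U w. disc {0..\<tau>} U w \<and> (\<forall>k\<in>{n..N}. t - \<delta> \<le> (\<Sum>x\<in>U. w x * gk n \<phi> p k x)))"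
  by (rule dichotomy[OF _ _ _ assms, where B="Bp p \<phi>"])
     (use tau Bp[OF p tau n phi] gk_nonneg[OF p tau n phi] in auto)

lemma combine:
  assumes t: "0 < t" "t < t'" and nov: "\<And>v. v \<in> Vset \<tau> \<Longrightarrow> ennreal (1 / t) < ratio n \<phi> p \<tau> v"
  shows "ennreal (1 / t') \<le> (INF w\<in>Vset \<tau>. ratio n \<phi> p \<tau> w)"
    and "ennreal (1 / t' powr (1/p)) \<le> K_const n \<phi> p \<tau>"
proof -
  have "\<exists>N a. (\<forall>k\<in>{n..N}. 0 \<le> a k) \<and> sum a {n..N} = 1 \<and> (\<forall>u\<in>{0..\<tau>}. (\<Sum>k\<in>{n..N}. a k * gk n \<phi> p k u) \<le> t')"
  proof (rule ccontr)
    assume nb: "\<not> ?thesis"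
    have "\<exists>U w. disc {0..\<tau>} U w \<and> (\<forall>k. n \<le> k \<and> k \<le> N \<longrightarrow> t - 1 / real (Suc N) \<le> (\<Sum>x\<in>U. w x * gk n \<phi> p k x))" for N
    proof -
      have "\<forall>\<delta>>0. \<exists>U w. disc {0..\<tau>} U w \<and> (\<forall>k\<in>{n..N}. t - \<delta> \<le> (\<Sum>x\<in>U. w x * gk n \<phi> p k x))"
        using level_dich[OF t(2), of N] nb by blast
      moreover have pos: "(0::real) < 1 / real (Suc N)" by simp
      ultimately obtain U w where Uw: "disc {0..\<tau>} U w" "\<forall>k\<in>{n..N}. t - 1 / real (Suc N) \<le> (\<Sum>x\<in>U. w x * gk n \<phi> p k x)"
        by blast
      show ?thesis using Uw by (intro exI[of _ U] exI[of _ w]) auto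
    qed
    then obtain v where "v \<in> Vset \<tau>" "ratio n \<phi> p \<tau> v \<le> ennreal (1 / t)"
      using level_A[OF t(1)] by blast
    then show False using nov by (simp add: not_less[symmetric])
  qed
  then obtain N a where a: "\<And>k. k \<in> {n..N} \<Longrightarrow> 0 \<le> a k" "sum a {n..N} = 1"
      "\<And>u. u \<in> {0..\<tau>} \<Longrightarrow> (\<Sum>k\<in>{n..N}. a k * gk n \<phi> p k u) \<le> t'" by blast
  have t'0: "0 < t'" using t by simp
  show "ennreal (1 / t') \<le> (INF w\<in>Vset \<tau>. ratio n \<phi> p \<tau> w)"
    by (rule level_B(1)[OF p tau n phi a t'0])
  show "ennreal (1 / t' powr (1/p)) \<le> K_const n \<phi> p \<tau>"
    by (rule level_B(2)[OF p tau n phi a t'0])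
qed

lemma ratio_lower:
  assumes v: "v \<in> Vset \<tau>"
  shows "ennreal (1 / Bp p \<phi>) \<le> ratio n \<phi> p \<tau> v"
proof -
  have vp: "0 < v \<tau> - v 0" using Vset_pos[OF v] by simp
  have B: "0 < Bp p \<phi>" using Bp[OF p tau n phi] by simp
  have I: "I_fun n \<phi> p \<tau> v \<le> ennreal (Bp p \<phi> * (v \<tau> - v 0))" by (rule I_fin[OF p tau n phi v])
  show ?thesis
  proof (cases "I_fun n \<phi> p \<tau> v" rule: ennreal_cases)
    case (real i)
    show ?thesis
    proof (cases "i = 0")
      case True
      then show ?thesis unfolding ratio_def real using vp by (simp add: ennreal_div_zero_top)
    next
      case False
      then have ip: "0 < i" using real by simp
      have ib: "i \<le> Bp p \<phi> * (v \<tau> - v 0)" using I real vp B by (simp add: ennreal_le_iff)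
      have "1 / Bp p \<phi> \<le> (v \<tau> - v 0) / i" using ip ib B vp by (simp add: field_simps)
      then have "ennreal (1 / Bp p \<phi>) \<le> ennreal ((v \<tau> - v 0) / i)" by (rule ennreal_leI)
      also have "\<dots> = ratio n \<phi> p \<tau> v" unfolding ratio_def real using ip vp by (simp add: divide_ennreal)
      finally show ?thesis .
    qed
  next
    case top then show ?thesis by (metis I ennreal_less_top leD)
  qed
qed

lemma K_le_C: "K_const n \<phi> p \<tau> \<le> C_const n \<phi> p \<tau>"
  unfolding K_const_def
proof (rule SUP_least)
  fix f assume "f \<in> {f \<in> Sp p. \<not> (\<exists>c. AE x in lebesgue. f x = c)}"
  then have f: "f \<in> Sp p" by simp
  let ?E = "best_approx n f p" and ?w = "modulus \<phi> f (\<tau> / real n) p"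
  have w0: "0 \<le> ?w" by (rule modulus_nonneg[OF phi f p]) (use tau in simp)
  show "ennreal ?E / ennreal ?w \<le> C_const n \<phi> p \<tau>"
  proof (cases "?w = 0")
    case True
    then show ?thesis using omega_zero_E[OF p tau n phi f] by simp
  next
    case False
    have "ennreal ?E / ennreal ?w \<le> (C_const n \<phi> p \<tau> * ennreal ?w) / ennreal ?w"
      by (rule divide_right_mono_ennreal) (rule part1[OF p tau n phi f])
    also have "\<dots> = C_const n \<phi> p \<tau>" using False w0 by (intro ennreal_mult_divide_eq) auto
    finally show ?thesis .
  qed
qed

end

theorem theorem2:
  fixes p \<tau> :: real and n :: nat and \<phi> :: "real \<Rightarrow> real"
  assumes "1 \<le> p" and "0 < \<tau>" and "1 \<le> n" and "\<phi> \<in> Phi"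
  shows "(\<forall>f \<in> Sp p. ennreal (best_approx n f p)
            \<le> C_const n \<phi> p \<tau> * ennreal (modulus \<phi> f (\<tau> / real n) p))
    \<and> (\<exists>v\<in>Vset \<tau>. ratio n \<phi> p \<tau> v = (INF w\<in>Vset \<tau>. ratio n \<phi> p \<tau> w))
    \<and> K_const n \<phi> p \<tau> = C_const n \<phi> p \<tau>"
proof -
  note p = assms(1) and tau = assms(2) and n = assms(3) and phi = assms(4)
  let ?m = "INF w\<in>Vset \<tau>. ratio n \<phi> p \<tau> w"
  let ?K = "K_const n \<phi> p \<tau>" and ?C = "C_const n \<phi> p \<tau>"
  have P1: "\<forall>f \<in> Sp p. ennreal (best_approx n f p) \<le> ?C * ennreal (modulus \<phi> f (\<tau> / real n) p)"
    using part1[OF p tau n phi] by blast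
  have KC: "?K \<le> ?C" by (rule K_le_C[OF p tau n phi])
  have mle: "?m \<le> ratio n \<phi> p \<tau> v" if "v \<in> Vset \<tau>" for v by (rule INF_lower[OF that])
  have P23: "(\<exists>v\<in>Vset \<tau>. ratio n \<phi> p \<tau> v = ?m) \<and> ?K = ?C"
  proof (cases "?m = top")
    case True
    have m1: "mono_on {0..\<tau>} (\<lambda>x::real. x)" by (rule mono_onI) auto
    have m2: "bounded ((\<lambda>x::real. x) ` {0..\<tau>})" by simp
    have m3: "\<exists>a\<in>{0..\<tau>}. \<exists>b\<in>{0..\<tau>}. (a::real) \<noteq> b" using tau by (intro bexI[of _ 0] bexI[of _ \<tau>]) auto
    have idV: "(\<lambda>x. x) \<in> Vset \<tau>" unfolding Vset_def using m1 m2 m3 by simp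
    have att: "\<exists>v\<in>Vset \<tau>. ratio n \<phi> p \<tau> v = ?m"
      using mle[OF idV] True idV by (auto simp: top_unique)
    have Kb: "ennreal (1 / t' powr (1/p)) \<le> ?K" if t': "0 < t'" for t'
    proof (rule combine(2)[OF p tau n phi, of "t' / 2"])
      show "0 < t' / 2" "t' / 2 < t'" using t' by auto
      fix v assume "v \<in> Vset \<tau>"
      then have "ratio n \<phi> p \<tau> v = top" using mle True by (simp add: top_unique)
      then show "ennreal (1 / (t' / 2)) < ratio n \<phi> p \<tau> v" by simp
    qed
    have "?K = top"
    proof (rule ccontr)
      assume "?K \<noteq> top"
      then obtain k where k: "?K = ennreal k" "0 \<le> k" by (cases ?K rule: ennreal_cases) auto
      define t' where "t' = (1 / (k + 1)) powr p"
      have t'0: "0 < t'" using k by (simp add: t'_def)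
      have "t' powr (1/p) = 1 / (k + 1)" using k p by (simp add: t'_def powr_powr)
      then have "1 / t' powr (1/p) = k + 1" by simp
      then have "ennreal (k + 1) \<le> ennreal k" using Kb[OF t'0] k by simp
      then show False using k by (simp add: ennreal_le_iff)
    qed
    moreover have "?C = top" unfolding C_const_def Let_def using True by simp
    ultimately show ?thesis using att by simp
  next
    case False
    obtain m where m: "?m = ennreal m" "0 \<le> m" using False by (cases ?m rule: ennreal_cases) auto
    have Bpos: "0 < Bp p \<phi>" using Bp[OF p tau n phi] by simp
    have "ennreal (1 / Bp p \<phi>) \<le> ?m" by (rule INF_greatest) (rule ratio_lower[OF p tau n phi])
    then have "1 / Bp p \<phi> \<le> m" using m by (simp add: ennreal_le_iff)
    then have mpos: "0 < m" using Bpos by (meson divide_pos_pos order_less_le_trans zero_less_one)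
    define S where "S = 1 / m"
    have Spos: "0 < S" using mpos by (simp add: S_def)
    have noB: "\<not> (ennreal (1 / t') \<le> ?m)" if "0 < t'" "t' < S" for t'
    proof
      assume "ennreal (1 / t') \<le> ?m"
      then have "1 / t' \<le> m" using m by (simp add: ennreal_le_iff)
      then have "1 \<le> m * t'" using that by (simp add: field_simps)
      then show False using that mpos by (simp add: S_def field_simps)
    qed
    have att: "\<exists>v\<in>Vset \<tau>. ratio n \<phi> p \<tau> v = ?m"
    proof -
      have H: "\<exists>U w. disc {0..\<tau>} U w \<and> (\<forall>k. n \<le> k \<and> k \<le> N \<longrightarrow> S - 1 / real (Suc N) \<le> (\<Sum>x\<in>U. w x * gk n \<phi> p k x))" for N
      proof -
        define e where "e = 1 / real (Suc N)"
        have e: "0 < e" by (simp add: e_def)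
        define tN where "tN = max (S / 4) (S - e / 2)"
        define tN' where "tN' = max (S / 2) (S - e / 4)"
        have tt: "0 < tN" "tN < tN'" "tN' < S" using Spos e
          by (auto simp: tN_def tN'_def max_less_iff_conj less_max_iff_disj)
        have "\<not> (\<exists>a. (\<forall>k\<in>{n..N}. 0 \<le> a k) \<and> sum a {n..N} = 1 \<and> (\<forall>u\<in>{0..\<tau>}. (\<Sum>k\<in>{n..N}. a k * gk n \<phi> p k u) \<le> tN'))"
        proof
          assume "\<exists>a. (\<forall>k\<in>{n..N}. 0 \<le> a k) \<and> sum a {n..N} = 1 \<and> (\<forall>u\<in>{0..\<tau>}. (\<Sum>k\<in>{n..N}. a k * gk n \<phi> p k u) \<le> tN')"
          then obtain a where a: "\<And>k. k \<in> {n..N} \<Longrightarrow> 0 \<le> a k" "sum a {n..N} = 1"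
            "\<And>u. u \<in> {0..\<tau>} \<Longrightarrow> (\<Sum>k\<in>{n..N}. a k * gk n \<phi> p k u) \<le> tN'" by blast
          have "ennreal (1 / tN') \<le> ?m" by (rule level_B(1)[OF p tau n phi a]) (use tt in auto)
          then show False using noB[of tN'] tt by auto
        qed
        then have A: "\<forall>\<delta>>0. \<exists>U w. disc {0..\<tau>} U w \<and> (\<forall>k\<in>{n..N}. tN - \<delta> \<le> (\<Sum>x\<in>U. w x * gk n \<phi> p k x))"
          using level_dich[OF p tau n phi tt(2), of N] by blast
        have pos: "(0::real) < e / 2" using e by simp
        obtain U w where Uw: "disc {0..\<tau>} U w" "\<forall>k\<in>{n..N}. tN - e / 2 \<le> (\<Sum>x\<in>U. w x * gk n \<phi> p k x)"
          using A pos by blast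
        have "S - e \<le> tN - e / 2" by (simp add: tN_def)
        then have "S - 1 / real (Suc N) \<le> tN - e / 2" by (simp add: e_def)
        then show ?thesis using Uw by (intro exI[of _ U] exI[of _ w]) force
      qed
      obtain v where v: "v \<in> Vset \<tau>" "ratio n \<phi> p \<tau> v \<le> ennreal (1 / S)"
        using level_A[OF p tau n phi Spos H] by blast
      have "ratio n \<phi> p \<tau> v \<le> ?m" using v m mpos by (simp add: S_def)
      then show ?thesis using mle[OF v(1)] v(1) by (intro bexI[of _ v]) auto
    qed
    have Cm: "?C = ennreal (m powr (1/p))" unfolding C_const_def Let_def using False m by simp
    have "ennreal (m powr (1/p)) \<le> ?K"
    proof (rule ennreal_dense_le)
      show "0 < m powr (1/p)" using mpos by simp
      fix x assume x: "0 < x" "x < m powr (1/p)"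
      define t' where "t' = (1 / x) powr p"
      have xt: "1 / t' powr (1/p) = x" using x p by (simp add: t'_def powr_powr)
      have "S < t'"
      proof -
        have "(1 / m) powr (1/p) < 1 / x"
          using x mpos by (simp add: powr_divide field_simps)
        then have "((1 / m) powr (1/p)) powr p < (1 / x) powr p"
          using p mpos by (intro powr_less_mono2) auto
        then show ?thesis using p mpos by (simp add: S_def t'_def powr_powr)
      qed
      define t where "t = (S + t') / 2"
      have tt: "0 < t" "t < t'" "S < t" using Spos \<open>S < t'\<close> by (auto simp: t_def)
      have "ennreal (1 / t' powr (1/p)) \<le> ?K"
      proof (rule combine(2)[OF p tau n phi tt(1,2)])
        fix v assume v: "v \<in> Vset \<tau>"
        have "1 / t < m" using tt mpos by (simp add: S_def field_simps)
        then have "ennreal (1 / t) < ennreal m" using mpos by (intro ennreal_lessI)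
        also have "\<dots> \<le> ratio n \<phi> p \<tau> v" using mle[OF v] m by simp
        finally show "ennreal (1 / t) < ratio n \<phi> p \<tau> v" .
      qed
      then show "ennreal x \<le> ?K" using xt by simp
    qed
    then have "?K = ?C" using KC Cm by simp
    then show ?thesis using att by simp
  qed
  show ?thesis using P1 P23 by simp
qed

end
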